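(* Let $q\ge2$, let $U$ be a $q\times q$ row-stochastic matrix (a DMC on $[1:q]$), and let $\Sigma_{n,U}$ denote the $n$-block noisy permutation channel built from $U$ (defined in the context). Logarithms are to base $2$. (i) (Achievability.) Let $r$ be the rank of $U$. There is a constant $c$ such that there exists a sequence of $\left(n,\left(\frac{n}{c\log n}\right)^{(r-1)/2},\lambda_{1,n},\lambda_{2,n}\right)$ ID codes for $\Sigma_{n,U}$ with deterministic encoders and deterministic decoders such that $\lambda_{1,n},\lambda_{2,n}\to0$ as $n\to\infty$. (ii) (Weak converse.) Assume all entries of $U$ are strictly positive. There exists a real number $R'$ such that for every $R>R'$, every sequence $(n_i)$ with $n_i\to\infty$ and every sequence of $\left(n_i, R\,n_i^{(q-1)/2}(\log n_i)^{(q-1)(q-2)/2},\lambda_{1,i},\lambda_{2,i}\right)$ ID codes with deterministic encoders and decoders for $\Sigma_{n_i,U}$, we have $\liminf_{i\to\infty}(\lambda_{1,i}+\lambda_{2,i})>0$. (iii) (Strong converse.) Assume all entries of $U$ are strictly positive. For any sequences $(n_i)$, $(c_i)$ with $n_i\to\infty$, $c_i\to\infty$, and any sequence of $\left(n_i, c_i\,n_i^{(q-1)/2}(\log n_i)^{(q-1)(q-2)/2},\lambda_{1,i},\lambda_{2,i}\right)$ ID codes with deterministic encoders and decoders for $\Sigma_{n_i,U}$, we have $\liminf_{i\to\infty}(\lambda_{1,i}+\lambda_{2,i})\ge1$.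
   Context: Noisy permutation channel $\Sigma_{n,U}$: input $\mathbf{x}\in[1:q]^n$; a permutation $\sigma$ of $[1:n]$ is drawn uniformly at random, $z_i=x_{\sigma^{-1}(i)}$, and each $z_i$ passes independently through $U$, giving output $\mathbf{y}\in[1:q]^n$; i.e. $P_\Sigma(\mathbf{y}|\mathbf{x})=\frac1{n!}\sum_{\sigma}\prod_i U(y_i|x_{\sigma^{-1}(i)})$. ID codes: an $L$-sized ID code for a channel $P(y|x)$ from $\mathcal{A}$ to $\mathcal{B}$ with deterministic decoders is $\{(Q_i,\mathcal{D}_i)\}_{i=1}^L$ with $Q_i$ a distribution on $\mathcal{A}$ and $\mathcal{D}_i\subseteq\mathcal{B}$; it has a deterministic encoder if every $Q_i$ is a point mass (at a codeword $\mathbf{x}_i$). Error probabilities: $\lambda_{i\to j}=\sum_x Q_i(x)\sum_{y\in\mathcal{D}_j}P(y|x)$ ($i\ne j$), $\lambda_{i\not\to i}=\sum_xQ_i(x)\sum_{y\notin\mathcal{D}_i}P(y|x)$, $\lambda_1=\max_i\lambda_{i\not\to i}$, $\lambda_2=\max_{i\ne j}\lambda_{i\to j}$. An $(n,L,\lambda_1,\lambda_2)$ ID code for $\Sigma_{n,U}$ is an $L$-sized ID code for $\Sigma_{n,U}$ with these error probabilities. *)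

theory Defs
  imports "HOL-Analysis.Analysis" "HOL-Combinatorics.Permutations"
begin

text \<open>The alphabet [1:q] is modelled by a finite type 'q with q = CARD('q).
  A DMC U is a q x q real matrix with U $ x $ y = U(y|x) (rows = inputs).\<close>

definition row_stochastic :: "real^'q^'q \<Rightarrow> bool" where
  "row_stochastic U \<longleftrightarrow> (\<forall>x y. 0 \<le> U $ x $ y) \<and> (\<forall>x. (\<Sum>y\<in>UNIV. U $ x $ y) = 1)"

definition words :: "nat \<Rightarrow> 'q list set" where
  "words n = {xs. length xs = n}"

definition perm_channel :: "real^'q^'q \<Rightarrow> nat \<Rightarrow> 'q list \<Rightarrow> 'q list \<Rightarrow> real" where
  "perm_channel U n x y =
     (1 / fact n) * (\<Sum>\<sigma>\<in>{\<sigma>. \<sigma> permutes {..<n}}. \<Prod>i<n. U $ (x ! (inv \<sigma> i)) $ (y ! i))"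

definition det_ID_code :: "nat \<Rightarrow> nat \<Rightarrow> (nat \<Rightarrow> 'q list) \<Rightarrow> (nat \<Rightarrow> 'q list set) \<Rightarrow> bool" where
  "det_ID_code n L enc dec \<longleftrightarrow> (\<forall>i<L. enc i \<in> words n \<and> dec i \<subseteq> words n)"

definition err_miss :: "real^'q^'q \<Rightarrow> nat \<Rightarrow> (nat \<Rightarrow> 'q list) \<Rightarrow> (nat \<Rightarrow> 'q list set) \<Rightarrow> nat \<Rightarrow> real" where
  "err_miss U n enc dec i = (\<Sum>y\<in>words n - dec i. perm_channel U n (enc i) y)"

definition err_false :: "real^'q^'q \<Rightarrow> nat \<Rightarrow> (nat \<Rightarrow> 'q list) \<Rightarrow> (nat \<Rightarrow> 'q list set) \<Rightarrow> nat \<Rightarrow> nat \<Rightarrow> real" where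
  "err_false U n enc dec i j = (\<Sum>y\<in>dec j. perm_channel U n (enc i) y)"

text \<open>lambda_1 = max_i lambda_{i -/-> i}; lambda_2 = max_{i \<noteq> j} lambda_{i -> j}
  (a maximum over an empty index set is taken to be 0; all terms are nonnegative).\<close>
definition lambda1 :: "real^'q^'q \<Rightarrow> nat \<Rightarrow> nat \<Rightarrow> (nat \<Rightarrow> 'q list) \<Rightarrow> (nat \<Rightarrow> 'q list set) \<Rightarrow> real" where
  "lambda1 U n L enc dec = Max ({0} \<union> (\<lambda>i. err_miss U n enc dec i) ` {..<L})"

definition lambda2 :: "real^'q^'q \<Rightarrow> nat \<Rightarrow> nat \<Rightarrow> (nat \<Rightarrow> 'q list) \<Rightarrow> (nat \<Rightarrow> 'q list set) \<Rightarrow> real" where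
  "lambda2 U n L enc dec =
     Max ({0} \<union> (\<lambda>(i, j). err_false U n enc dec i j) ` {(i, j). i < L \<and> j < L \<and> i \<noteq> j})"

end

theory Submission
  imports Defs "HOL-Real_Asymp.Real_Asymp"
begin

definition PCL :: "('q \<Rightarrow> real) list \<Rightarrow> 'q list \<Rightarrow> real" where
  "PCL rs y = (1 / fact (length rs)) *
     (\<Sum>\<sigma>\<in>{\<sigma>. \<sigma> permutes {..<length rs}}. \<Prod>j<length rs. (rs ! j) (y ! \<sigma> j))"

lemma perm_channel_PCL:
  assumes "length x = n"
  shows "perm_channel U n x y = PCL (map (\<lambda>a b. U $ a $ b) x) y"
proof -
  have "(\<Prod>i<n. U $ (x ! (inv \<sigma> i)) $ (y ! i)) = (\<Prod>j<n. U $ (x ! j) $ (y ! \<sigma> j))"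
    if "\<sigma> permutes {..<n}" for \<sigma>
  proof -
    have "(\<Prod>i<n. U $ (x ! (inv \<sigma> i)) $ (y ! i)) = (\<Prod>j<n. U $ (x ! (inv \<sigma> (\<sigma> j))) $ (y ! \<sigma> j))"
      using prod.reindex_bij_betw[OF permutes_imp_bij[OF that], of "\<lambda>i. U $ (x ! (inv \<sigma> i)) $ (y ! i)"] by simp
    then show ?thesis using permutes_inverses(2)[OF that] by simp
  qed
  then have "(\<Sum>\<sigma>\<in>{\<sigma>. \<sigma> permutes {..<n}}. \<Prod>i<n. U $ (x ! (inv \<sigma> i)) $ (y ! i))
     = (\<Sum>\<sigma>\<in>{\<sigma>. \<sigma> permutes {..<n}}. \<Prod>j<n. U $ (x ! j) $ (y ! \<sigma> j))"
    by (intro sum.cong) auto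
  then show ?thesis unfolding perm_channel_def PCL_def using assms by simp
qed

lemma PCL_permute:
  assumes "\<pi> permutes {..<length rs}"
  shows "PCL (permute_list \<pi> rs) y = PCL rs y"
proof -
  let ?n = "length rs"
  have *: "(\<Prod>j<?n. (permute_list \<pi> rs ! j) (y ! \<sigma> j)) = (\<Prod>j<?n. (rs ! j) (y ! (\<sigma> \<circ> inv \<pi>) j))"
    if "\<sigma> permutes {..<?n}" for \<sigma>
  proof -
    have "(\<Prod>j<?n. (permute_list \<pi> rs ! j) (y ! \<sigma> j)) = (\<Prod>j<?n. (rs ! \<pi> j) (y ! \<sigma> j))"
      by (rule prod.cong) (auto simp: permute_list_nth assms)
    also have "... = (\<Prod>j<?n. (rs ! \<pi> j) (y ! (\<sigma> \<circ> inv \<pi>) (\<pi> j)))"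
      using permutes_inverses(2)[OF assms] by simp
    also have "... = (\<Prod>k<?n. (rs ! k) (y ! (\<sigma> \<circ> inv \<pi>) k))"
      using prod.reindex_bij_betw[OF permutes_imp_bij[OF assms], of "\<lambda>k. (rs ! k) (y ! (\<sigma> \<circ> inv \<pi>) k)"] by simp
    finally show ?thesis .
  qed
  have "(\<Sum>\<sigma>\<in>{\<sigma>. \<sigma> permutes {..<?n}}. \<Prod>j<?n. (permute_list \<pi> rs ! j) (y ! \<sigma> j))
      = (\<Sum>\<sigma>\<in>{\<sigma>. \<sigma> permutes {..<?n}}. \<Prod>j<?n. (rs ! j) (y ! (\<sigma> \<circ> inv \<pi>) j))"
    using * by (intro sum.cong) auto
  also have "... = (\<Sum>\<sigma>\<in>{\<sigma>. \<sigma> permutes {..<?n}}. \<Prod>j<?n. (rs ! j) (y ! \<sigma> j))"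
    using sum_permutations_compose_right[OF permutes_inv[OF assms],
        of "\<lambda>\<sigma>. \<Prod>j<?n. (rs ! j) (y ! \<sigma> j)"] by simp
  finally show ?thesis unfolding PCL_def by simp
qed

lemma PCL_mset:
  assumes "mset rs = mset rs'"
  shows "PCL rs y = PCL rs' y"
proof -
  obtain p where p: "p permutes {..<length rs'}" "permute_list p rs' = rs"
    using mset_eq_permutation[OF assms] by blast
  show ?thesis using PCL_permute[OF p(1)] p(2) by simp
qed

lemma PCL_Cons_lin:
  "PCL ((\<lambda>b. a * u b + c * v b) # rs) y = a * PCL (u # rs) y + c * PCL (v # rs) y"
  unfolding PCL_def
  by (simp add: prod.lessThan_Suc_shift sum_distrib_left sum.distrib algebra_simps del: fact_Suc prod.lessThan_Suc)

lemma finite_words[simp]: "finite (words n :: 'q::finite list set)"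
  unfolding words_def using finite_lists_length_eq[of "UNIV :: 'q set" n] by simp

lemma words_Suc: "words (Suc n) = (\<lambda>(a, y). a # y) ` (UNIV \<times> words n)"
  unfolding words_def by (auto simp: length_Suc_conv image_iff)

lemma sum_words_prod:
  fixes s :: "nat \<Rightarrow> 'q::finite \<Rightarrow> real"
  shows "(\<Sum>y\<in>words n. \<Prod>j<n. s j (y ! j)) = (\<Prod>j<n. \<Sum>a\<in>UNIV. s j a)"
proof (induction n arbitrary: s)
  case 0 
  have w0: "words 0 = {[]}" unfolding words_def by auto
  show ?case by (simp add: w0)
next
  case (Suc n)
  have "(\<Sum>y\<in>words (Suc n). \<Prod>j<Suc n. s j (y ! j))
       = (\<Sum>(a,y)\<in>UNIV \<times> words n. \<Prod>j<Suc n. s j ((a#y) ! j))"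
    unfolding words_Suc by (subst sum.reindex) (auto simp: inj_on_def case_prod_unfold simp del: prod.lessThan_Suc)
  also have "... = (\<Sum>a\<in>UNIV. \<Sum>y\<in>words n. s 0 a * (\<Prod>j<n. s (Suc j) (y ! j)))"
    by (simp add: sum.cartesian_product prod.lessThan_Suc_shift del: prod.lessThan_Suc)
  also have "... = (\<Sum>a\<in>UNIV. s 0 a) * (\<Prod>j<n. \<Sum>a\<in>UNIV. s (Suc j) a)"
    by (simp add: Suc.IH[of "\<lambda>j. s (Suc j)"] sum_distrib_left[symmetric] sum_distrib_right)
  also have "... = (\<Prod>j<Suc n. \<Sum>a\<in>UNIV. s j a)" by (simp add: prod.lessThan_Suc_shift del: prod.lessThan_Suc)
  finally show ?case .
qed

lemma permute_list_bij_words: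
  assumes "\<sigma> permutes {..<n}"
  shows "bij_betw (permute_list \<sigma>) (words n) (words n)"
proof -
  have h1: "permute_list (inv \<sigma>) (permute_list \<sigma> y) = y" if "y \<in> words n" for y :: "'a list"
  proof -
    from that have l: "length y = n" by (simp add: words_def)
    have "permute_list (inv \<sigma>) (permute_list \<sigma> y) = permute_list (\<sigma> \<circ> inv \<sigma>) y"
      using permute_list_compose[of "inv \<sigma>" y \<sigma>] permutes_inv[OF assms] l by simp
    also have "... = y" using permutes_inverses(1)[OF assms] 
      by (simp add: permute_list_def comp_def map_nth)
    finally show ?thesis .
  qed
  have h2: "permute_list \<sigma> (permute_list (inv \<sigma>) y) = y" if "y \<in> words n" for y :: "'a list"
  proof -
    from that have l: "length y = n" by (simp add: words_def)
    have "permute_list \<sigma> (permute_list (inv \<sigma>) y) = permute_list (inv \<sigma> \<circ> \<sigma>) y"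
      using permute_list_compose[of "\<sigma>" y "inv \<sigma>"] assms l by simp
    also have "... = y" using permutes_inverses(2)[OF assms] 
      by (simp add: permute_list_def comp_def map_nth)
    finally show ?thesis .
  qed
  show ?thesis
    by (rule bij_betw_byWitness[where f' = "permute_list (inv \<sigma>)"]) (use h1 h2 in \<open>auto simp: words_def\<close>)
qed

lemma PCL_sym_sum:
  fixes g :: "'q::finite list \<Rightarrow> real"
  assumes g: "\<And>y \<sigma>. y \<in> words n \<Longrightarrow> \<sigma> permutes {..<n} \<Longrightarrow> g (permute_list \<sigma> y) = g y"
    and len: "length rs = n"
  shows "(\<Sum>y\<in>words n. g y * PCL rs y) = (\<Sum>y\<in>words n. g y * (\<Prod>j<n. (rs ! j) (y ! j)))"
proof -
  let ?P = "{\<sigma>. \<sigma> permutes {..<n}}"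
  have inner: "(\<Sum>y\<in>words n. g y * (\<Prod>j<n. (rs ! j) (y ! \<sigma> j)))
       = (\<Sum>y\<in>words n. g y * (\<Prod>j<n. (rs ! j) (y ! j)))" if s: "\<sigma> permutes {..<n}" for \<sigma>
  proof -
    have "(\<Sum>y\<in>words n. g y * (\<Prod>j<n. (rs ! j) (y ! \<sigma> j)))
        = (\<Sum>y\<in>words n. (\<lambda>z. g z * (\<Prod>j<n. (rs ! j) (z ! j))) (permute_list \<sigma> y))"
    proof (rule sum.cong[OF refl])
      fix y :: "'q list" assume y: "y \<in> words n"
      then have l: "length y = n" by (simp add: words_def)
      have "(\<Prod>j<n. (rs ! j) (y ! \<sigma> j)) = (\<Prod>j<n. (rs ! j) (permute_list \<sigma> y ! j))"
        by (rule prod.cong) (auto simp: permute_list_nth l s)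
      then show "g y * (\<Prod>j<n. (rs ! j) (y ! \<sigma> j)) =
          (\<lambda>z. g z * (\<Prod>j<n. (rs ! j) (z ! j))) (permute_list \<sigma> y)"
        using g[OF y s] by simp
    qed
    also have "... = (\<Sum>y\<in>words n. g y * (\<Prod>j<n. (rs ! j) (y ! j)))"
      using sum.reindex_bij_betw[OF permute_list_bij_words[OF s], of "\<lambda>z. g z * (\<Prod>j<n. (rs ! j) (z ! j))"] by simp
    finally show ?thesis .
  qed
  have "(\<Sum>y\<in>words n. g y * PCL rs y)
      = (1 / fact n) * (\<Sum>\<sigma>\<in>?P. \<Sum>y\<in>words n. g y * (\<Prod>j<n. (rs ! j) (y ! \<sigma> j)))"
    unfolding PCL_def len by (subst sum.swap) (simp add: sum_distrib_left sum_distrib_right algebra_simps)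
  also have "... = (1 / fact n) * (\<Sum>\<sigma>\<in>?P. \<Sum>y\<in>words n. g y * (\<Prod>j<n. (rs ! j) (y ! j)))"
    using inner by simp
  also have "... = (\<Sum>y\<in>words n. g y * (\<Prod>j<n. (rs ! j) (y ! j)))"
    by (simp add: card_permutations)
  finally show ?thesis .
qed

definition probvec :: "('q::finite \<Rightarrow> real) \<Rightarrow> bool" where
  "probvec r \<longleftrightarrow> (\<forall>a. 0 \<le> r a) \<and> (\<Sum>a\<in>UNIV. r a) = 1"

lemma PCL_nonneg:
  assumes "\<forall>r\<in>set rs. probvec r"
  shows "0 \<le> PCL rs y"
  unfolding PCL_def using assms
  by (intro mult_nonneg_nonneg sum_nonneg prod_nonneg) (auto simp: probvec_def)

lemma PCL_sum1:
  assumes "\<forall>r\<in>set rs. probvec r" "length rs = n"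
  shows "(\<Sum>y\<in>words n. PCL (rs :: ('q::finite \<Rightarrow> real) list) y) = 1"
proof -
  have "(\<Sum>y\<in>words n. PCL rs y) = (\<Sum>y\<in>words n. 1 * PCL rs y)" by simp
  also have "... = (\<Sum>y\<in>words n. 1 * (\<Prod>j<n. (rs ! j) (y ! j)))"
    by (rule PCL_sym_sum) (use assms in auto)
  also have "... = (\<Prod>j<n. \<Sum>a\<in>UNIV. (rs ! j) a)" using sum_words_prod by simp
  also have "... = 1" using assms by (intro prod.neutral) (auto simp: probvec_def)
  finally show ?thesis .
qed

lemma PCL_subset_le1:
  assumes "\<forall>r\<in>set rs. probvec r" "length rs = n" "A \<subseteq> words n"
  shows "(\<Sum>y\<in>A. PCL (rs :: ('q::finite \<Rightarrow> real) list) y) \<le> 1"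
    "0 \<le> (\<Sum>y\<in>A. PCL (rs :: ('q::finite \<Rightarrow> real) list) y)"
proof -
  have "(\<Sum>y\<in>A. PCL rs y) \<le> (\<Sum>y\<in>words n. PCL rs y)"
    using assms by (intro sum_mono2) (auto intro: PCL_nonneg)
  then show "(\<Sum>y\<in>A. PCL rs y) \<le> 1" using PCL_sum1[OF assms(1,2)] by simp
  show "0 \<le> (\<Sum>y\<in>A. PCL rs y)" using assms by (intro sum_nonneg PCL_nonneg) auto
qed

definition Bsum :: "real \<Rightarrow> nat \<Rightarrow> (nat \<Rightarrow> real) \<Rightarrow> real" where
  "Bsum p m f = (\<Sum>j\<le>m. real (m choose j) * p^j * (1-p)^(m-j) * f j)"

lemma Bsum_0[simp]: "Bsum p 0 f = f 0"
  unfolding Bsum_def by simp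

lemma Bsum_Suc:
  "Bsum p (Suc m) f = (1-p) * Bsum p m f + p * Bsum p m (\<lambda>j. f (Suc j))"
proof -
  define g where "g j = real (m choose j) * p^j * (1-p)^(Suc m - j) * f j" for j
  have A: "(1-p) * Bsum p m f = (\<Sum>j\<le>Suc m. g j)"
  proof -
    have "(\<Sum>j\<le>Suc m. g j) = (\<Sum>j\<le>m. g j)" by (simp add: g_def)
    also have "... = (1-p) * Bsum p m f"
      unfolding Bsum_def g_def sum_distrib_left
      by (rule sum.cong) (auto simp: Suc_diff_le)
    finally show ?thesis by simp
  qed
  have B: "(\<Sum>j\<le>Suc m. g j) = g 0 + (\<Sum>j\<le>m. g (Suc j))" by (rule sum.atMost_Suc_shift)
  have C: "Bsum p (Suc m) f = (1-p)^(Suc m) * f 0 +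
      (\<Sum>j\<le>m. real (Suc m choose Suc j) * p^(Suc j) * (1-p)^(m-j) * f (Suc j))"
    unfolding Bsum_def by (subst sum.atMost_Suc_shift) simp
  have D: "(\<Sum>j\<le>m. real (Suc m choose Suc j) * p^(Suc j) * (1-p)^(m-j) * f (Suc j))
      = (\<Sum>j\<le>m. g (Suc j)) + p * Bsum p m (\<lambda>j. f (Suc j))"
    unfolding Bsum_def g_def sum_distrib_left sum.distrib[symmetric]
    by (rule sum.cong) (auto simp: algebra_simps)
  show ?thesis using A B C D by (simp add: g_def)
qed

lemma Bsum_cong: "(\<And>j. j \<le> m \<Longrightarrow> f j = g j) \<Longrightarrow> Bsum p m f = Bsum p m g"
  unfolding Bsum_def by (rule sum.cong) auto

lemma Bsum_lin: "Bsum p m (\<lambda>j. a * f j + b * g j) = a * Bsum p m f + b * Bsum p m g"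
  unfolding Bsum_def by (simp add: sum.distrib sum_distrib_left algebra_simps)

lemma Bsum_sum: "finite A \<Longrightarrow> (\<Sum>y\<in>A. Bsum p m (\<lambda>j. F j y)) = Bsum p m (\<lambda>j. \<Sum>y\<in>A. F j y)"
  unfolding Bsum_def by (subst sum.swap) (simp add: sum_distrib_left)

lemma Bsum_nonneg: "0 \<le> p \<Longrightarrow> p \<le> 1 \<Longrightarrow> (\<And>j. j \<le> m \<Longrightarrow> 0 \<le> f j) \<Longrightarrow> 0 \<le> Bsum p m f"
  unfolding Bsum_def by (intro sum_nonneg mult_nonneg_nonneg) auto

lemma Bsum_mono: "0 \<le> p \<Longrightarrow> p \<le> 1 \<Longrightarrow> (\<And>j. j \<le> m \<Longrightarrow> f j \<le> g j) \<Longrightarrow> Bsum p m f \<le> Bsum p m g"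
  unfolding Bsum_def by (intro sum_mono mult_left_mono) auto

lemma Bsum_abs: "0 \<le> p \<Longrightarrow> p \<le> 1 \<Longrightarrow> \<bar>Bsum p m f\<bar> \<le> Bsum p m (\<lambda>j. \<bar>f j\<bar>)"
  unfolding Bsum_def by (rule order_trans[OF sum_abs]) (simp add: abs_mult)

lemma Bsum_const: "Bsum p m (\<lambda>_. c) = c"
  by (induction m) (simp_all add: Bsum_Suc algebra_simps)

lemma Bsum_lin1: "Bsum p m (\<lambda>j. real j + c) = real m * p + c"
proof (induction m arbitrary: c)
  case (Suc m)
  have e: "(\<lambda>j. real (Suc j) + c) = (\<lambda>j. real j + (c + 1))" by (simp add: algebra_simps)
  show ?case unfolding Bsum_Suc e Suc.IH by (simp add: algebra_simps)
qed simp

lemma Bsum_sq: "Bsum p m (\<lambda>j. (real j + c)^2) = (real m * p + c)^2 + real m * p * (1-p)"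
proof (induction m arbitrary: c)
  case (Suc m)
  have e: "(\<lambda>j. (real (Suc j) + c)^2) = (\<lambda>j. (real j + (c + 1))^2)" by (simp add: algebra_simps)
  show ?case unfolding Bsum_Suc e Suc.IH by (simp add: algebra_simps power2_eq_square)
qed simp

lemma Bsum_abs_dev:
  assumes "0 < p" "p < 1" "m \<ge> 1"
  shows "Bsum p m (\<lambda>j. \<bar>real j - real m * p\<bar>) \<le> sqrt (real m * p * (1-p))"
proof -
  define V where "V = real m * p * (1-p)"
  have Vp: "V > 0" using assms by (simp add: V_def)
  define t where "t = sqrt V"
  have tp: "t > 0" using Vp by (simp add: t_def)
  have tt: "t * t = V" using Vp by (simp add: t_def)
  have ineq: "\<bar>x\<bar> \<le> (x^2 / t + t) / 2" for x :: real
  proof -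
    have "0 \<le> (\<bar>x\<bar> - t)^2" by simp
    then have "2 * \<bar>x\<bar> * t \<le> x^2 + t * t" by (simp add: power2_eq_square algebra_simps)
    then show ?thesis using tp by (simp add: field_simps power2_eq_square)
  qed
  have "Bsum p m (\<lambda>j. \<bar>real j - real m * p\<bar>) \<le> Bsum p m (\<lambda>j. (1/(2*t)) * (real j + (- real m * p))^2 + (t/2) * 1)"
  proof (intro Bsum_mono)
    fix j
    have eq: "(1/(2*t)) * (real j + (- real m * p))^2 + (t/2) * 1 = ((real j - real m*p)^2/t + t)/2"
      using tp by (simp add: field_simps)
    show "\<bar>real j - real m * p\<bar> \<le> (1/(2*t)) * (real j + (- real m * p))^2 + (t/2) * 1"
      unfolding eq by (rule ineq)
  qed (use assms in auto)
  also have "... = (1/(2*t)) * V + t/2"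
    unfolding Bsum_lin Bsum_sq Bsum_const by (simp add: V_def)
  also have "... = t" using tt tp by (simp add: field_simps)
  finally show ?thesis by (simp add: t_def V_def)
qed

lemma inv_mult_sqrt: 
  assumes "(x::real) > 0" shows "(1/x) * sqrt x = 1 / sqrt x"
proof -
  define w where "w = sqrt x"
  have sp: "w > 0" using assms by (simp add: w_def)
  have "x = w * w" using assms by (simp add: w_def)
  moreover have "(1/(w*w)) * w = 1/w" using sp by (simp add: field_simps)
  ultimately show ?thesis by (simp add: w_def)
qed

lemma binom_shift_bound:
  assumes p: "0 < p" "p < 1" and m: "m \<ge> 1" and h: "\<And>j. j \<le> m \<Longrightarrow> 0 \<le> h j \<and> h j \<le> 1"
  shows "\<bar>Bsum p m h - Bsum p (m-1) (\<lambda>j. h (Suc j))\<bar> \<le> 1 / sqrt (real m * p)"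
proof -
  obtain k where k: "m = Suc k" using m by (cases m) auto
  have shift: "Bsum p k (\<lambda>j. h (Suc j)) = Bsum p (Suc k) (\<lambda>j. (real j / (real (Suc k) * p)) * h j)"
  proof -
    have "Bsum p (Suc k) (\<lambda>j. (real j / (real (Suc k) * p)) * h j)
        = (\<Sum>j\<le>k. real (Suc k choose Suc j) * p^(Suc j) * (1-p)^(k-j) *
             ((real (Suc j) / (real (Suc k) * p)) * h (Suc j)))"
      unfolding Bsum_def by (subst sum.atMost_Suc_shift) simp
    also have "... = (\<Sum>j\<le>k. real (k choose j) * p^j * (1-p)^(k-j) * h (Suc j))"
    proof (rule sum.cong[OF refl])
      fix j assume "j \<in> {..k}"
      have c: "real (Suc k choose Suc j) * real (Suc j) = real (Suc k) * real (k choose j)"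
        using Suc_times_binomial_eq[of k j] by (metis of_nat_mult mult.commute)
      have c': "real (Suc k choose Suc j) = real (Suc k) * real (k choose j) / real (Suc j)"
        using c by (simp add: field_simps del: binomial_Suc_Suc of_nat_Suc)
      show "real (Suc k choose Suc j) * p^(Suc j) * (1-p)^(k-j) *
             ((real (Suc j) / (real (Suc k) * p)) * h (Suc j))
          = real (k choose j) * p^j * (1-p)^(k-j) * h (Suc j)"
        unfolding c' using p by (simp add: field_simps del: binomial_Suc_Suc of_nat_Suc)
    qed
    finally show ?thesis unfolding Bsum_def by simp
  qed
  have "Bsum p m h - Bsum p (m-1) (\<lambda>j. h (Suc j))
      = Bsum p m (\<lambda>j. 1 * h j + (-1) * ((real j / (real m * p)) * h j))"
    unfolding Bsum_lin using shift k by simp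
  also have "... = Bsum p m (\<lambda>j. (1 - real j / (real m * p)) * h j)"
    by (simp add: algebra_simps)
  finally have eq: "Bsum p m h - Bsum p (m-1) (\<lambda>j. h (Suc j)) = Bsum p m (\<lambda>j. (1 - real j / (real m * p)) * h j)" .
  have mp: "real m * p > 0" using p m by simp
  have "\<bar>Bsum p m (\<lambda>j. (1 - real j / (real m * p)) * h j)\<bar>
      \<le> Bsum p m (\<lambda>j. \<bar>(1 - real j / (real m * p)) * h j\<bar>)"
    using p by (intro Bsum_abs) auto
  also have "... \<le> Bsum p m (\<lambda>j. (1 / (real m * p)) * \<bar>real j - real m * p\<bar> + 0 * 0)"
  proof (intro Bsum_mono)
    fix j assume j: "j \<le> m"
    have "\<bar>(1 - real j / (real m * p)) * h j\<bar> \<le> \<bar>1 - real j / (real m * p)\<bar>"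
      using h[OF j] by (simp add: abs_mult mult_left_le)
    also have "\<bar>1 - real j / (real m * p)\<bar> = (1 / (real m * p)) * \<bar>real j - real m * p\<bar>"
    proof -
      have ne: "real m * p \<noteq> 0" using mp by linarith
      have "(real m * p - real j) / (real m * p) = (real m * p) / (real m * p) - real j / (real m * p)"
        by (rule diff_divide_distrib)
      then have "1 - real j / (real m * p) = (real m * p - real j) / (real m * p)"
        using ne by simp
      then show ?thesis using mp by (simp add: abs_minus_commute)
    qed
    finally show "\<bar>(1 - real j / (real m * p)) * h j\<bar> \<le> (1 / (real m * p)) * \<bar>real j - real m * p\<bar> + 0 * 0" by simp
  qed (use p in auto)
  also have "... = (1 / (real m * p)) * Bsum p m (\<lambda>j. \<bar>real j - real m * p\<bar>)"
    unfolding Bsum_lin by simp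
  also have "... \<le> (1 / (real m * p)) * sqrt (real m * p * (1-p))"
    using Bsum_abs_dev[OF p m] mp by (intro mult_left_mono) auto
  also have "... \<le> (1 / (real m * p)) * sqrt (real m * p)"
    using p mp by (intro mult_left_mono real_sqrt_le_mono) (auto simp: mult_left_le)
  also have "... = 1 / sqrt (real m * p)" by (rule inv_mult_sqrt[OF mp])
  finally show ?thesis using eq by simp
qed

lemma PCL_expand:
  assumes ub: "\<And>b. ub b = p * ua b + (1-p) * R b"
  shows "PCL (replicate l ub @ rs) y = Bsum p l (\<lambda>j. PCL (replicate j ua @ replicate (l-j) R @ rs) y)"
proof (induction l arbitrary: rs)
  case 0
  then show ?case by simp
next
  case (Suc l)
  have ube: "ub = (\<lambda>b. p * ua b + (1-p) * R b)" using ub by auto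
  have "PCL (replicate (Suc l) ub @ rs) y = PCL (replicate l ub @ (ub # rs)) y"
    by (rule PCL_mset) simp
  also have "... = Bsum p l (\<lambda>j. PCL (replicate j ua @ replicate (l-j) R @ ub # rs) y)"
    by (rule Suc.IH)
  also have "... = Bsum p l (\<lambda>j. p * PCL (replicate (Suc j) ua @ replicate (l-j) R @ rs) y
                     + (1-p) * PCL (replicate j ua @ replicate (Suc l - j) R @ rs) y)"
  proof (rule Bsum_cong)
    fix j assume j: "j \<le> l"
    have "PCL (replicate j ua @ replicate (l-j) R @ ub # rs) y
        = PCL (ub # replicate j ua @ replicate (l-j) R @ rs) y"
      by (rule PCL_mset) simp
    also have "... = p * PCL (ua # replicate j ua @ replicate (l-j) R @ rs) y
                   + (1-p) * PCL (R # replicate j ua @ replicate (l-j) R @ rs) y"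
      unfolding ube by (rule PCL_Cons_lin)
    also have "PCL (ua # replicate j ua @ replicate (l-j) R @ rs) y
        = PCL (replicate (Suc j) ua @ replicate (l-j) R @ rs) y" by simp
    also have "PCL (R # replicate j ua @ replicate (l-j) R @ rs) y
        = PCL (replicate j ua @ replicate (Suc l - j) R @ rs) y"
      by (rule PCL_mset) (simp add: Suc_diff_le j)
    finally show "PCL (replicate j ua @ replicate (l-j) R @ ub # rs) y
       = p * PCL (replicate (Suc j) ua @ replicate (l-j) R @ rs) y
                     + (1-p) * PCL (replicate j ua @ replicate (Suc l - j) R @ rs) y" .
  qed
  also have "... = p * Bsum p l (\<lambda>j. PCL (replicate (Suc j) ua @ replicate (l-j) R @ rs) y)
       + (1-p) * Bsum p l (\<lambda>j. PCL (replicate j ua @ replicate (Suc l - j) R @ rs) y)"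
    by (rule Bsum_lin)
  also have "... = Bsum p (Suc l) (\<lambda>j. PCL (replicate j ua @ replicate (Suc l - j) R @ rs) y)"
    unfolding Bsum_Suc by simp
  finally show ?case .
qed

lemma PCL_step:
  fixes ua ub :: "'q::finite \<Rightarrow> real"
  assumes pua: "probvec ua" and pub: "probvec ub" and prs: "\<forall>r\<in>set rs. probvec r"
    and p: "0 < p" "p < 1" and dom: "\<And>b. p * ua b \<le> ub b" and m: "m \<ge> 1"
    and A: "A \<subseteq> words (m + length rs)"
  shows "\<bar>(\<Sum>y\<in>A. PCL (replicate m ub @ rs) y) - (\<Sum>y\<in>A. PCL (ua # replicate (m-1) ub @ rs) y)\<bar>
     \<le> 1 / sqrt (real m * p)"
proof -
  define R where "R b = (ub b - p * ua b) / (1 - p)" for b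
  have ub: "ub b = p * ua b + (1-p) * R b" for b using p by (simp add: R_def)
  have pR: "probvec R"
  proof -
    have "(\<Sum>b\<in>UNIV. R b) = ((\<Sum>b\<in>UNIV. ub b) - p * (\<Sum>b\<in>UNIV. ua b)) / (1 - p)"
      unfolding R_def sum_divide_distrib[symmetric] sum_subtractf sum_distrib_left by simp
    also have "... = 1" using pua pub p by (simp add: probvec_def)
    finally show ?thesis using dom p by (auto simp: probvec_def R_def)
  qed
  have finA: "finite A" using A finite_subset finite_words by blast
  define h where "h j = (\<Sum>y\<in>A. PCL (replicate j ua @ replicate (m-j) R @ rs) y)" for j
  have hb: "0 \<le> h j \<and> h j \<le> 1" if j: "j \<le> m" for j
  proof -
    have pv: "\<forall>r\<in>set (replicate j ua @ replicate (m-j) R @ rs). probvec r"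
      using pua pR prs by auto
    have len: "length (replicate j ua @ replicate (m-j) R @ rs) = m + length rs" using j by simp
    show ?thesis unfolding h_def using PCL_subset_le1[OF pv len A] by simp
  qed
  have e1: "(\<Sum>y\<in>A. PCL (replicate m ub @ rs) y) = Bsum p m h"
    unfolding PCL_expand[of ub p ua R, OF ub] h_def by (rule Bsum_sum[OF finA])
  have e2: "(\<Sum>y\<in>A. PCL (ua # replicate (m-1) ub @ rs) y) = Bsum p (m-1) (\<lambda>j. h (Suc j))"
  proof -
    have "(\<Sum>y\<in>A. PCL (ua # replicate (m-1) ub @ rs) y) = (\<Sum>y\<in>A. PCL (replicate (m-1) ub @ (ua # rs)) y)"
      by (intro sum.cong refl PCL_mset) simp
    also have "... = Bsum p (m-1) (\<lambda>j. \<Sum>y\<in>A. PCL (replicate j ua @ replicate (m-1-j) R @ ua # rs) y)"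
      unfolding PCL_expand[of ub p ua R, OF ub] by (rule Bsum_sum[OF finA])
    also have "... = Bsum p (m-1) (\<lambda>j. h (Suc j))"
    proof (rule Bsum_cong)
      fix j assume "j \<le> m - 1"
      then have "m - 1 - j = m - Suc j" by simp
      then show "(\<Sum>y\<in>A. PCL (replicate j ua @ replicate (m-1-j) R @ ua # rs) y) = h (Suc j)"
        unfolding h_def by (intro sum.cong refl PCL_mset) simp
    qed
    finally show ?thesis .
  qed
  show ?thesis unfolding e1 e2 by (rule binom_shift_bound[OF p m hb])
qed

definition rowv :: "real^'q^'q \<Rightarrow> 'q \<Rightarrow> 'q \<Rightarrow> real" where
  "rowv U a = (\<lambda>b. U $ a $ b)"

definition Pr :: "real^'q^'q \<Rightarrow> 'q list \<Rightarrow> 'q list set \<Rightarrow> real" where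
  "Pr U x A = (\<Sum>y\<in>A. perm_channel U (length x) x y)"

definition cnt :: "'q list \<Rightarrow> 'q \<Rightarrow> nat" where
  "cnt x a = count (mset x) a"

definition dnat :: "'q::finite list \<Rightarrow> 'q list \<Rightarrow> nat" where
  "dnat x x' = (\<Sum>e\<in>UNIV. (cnt x e - cnt x' e) + (cnt x' e - cnt x e))"

lemma Pr_PCL: "Pr U x A = (\<Sum>y\<in>A. PCL (map (rowv U) x) y)"
  unfolding Pr_def rowv_def by (intro sum.cong refl perm_channel_PCL)

lemma Pr_mset: "mset x = mset x' \<Longrightarrow> Pr U x A = Pr U x' A"
  unfolding Pr_PCL by (intro sum.cong refl PCL_mset) simp

lemma probvec_row: "row_stochastic U \<Longrightarrow> probvec (rowv U a)"
  unfolding row_stochastic_def probvec_def rowv_def by auto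

definition umin :: "real^'q::finite^'q \<Rightarrow> real" where
  "umin U = Min (range (\<lambda>(a, b). U $ a $ b))"

lemma umin_le: "umin U \<le> U $ a $ b"
  unfolding umin_def by (rule Min_le) auto

lemma umin_pos: "(\<forall>x y. U $ x $ y > 0) \<Longrightarrow> umin U > 0"
  unfolding umin_def by (subst Min_gr_iff) auto

lemma umin_lt1:
  assumes "row_stochastic U" "CARD('q::finite) \<ge> 2"
  shows "umin (U :: real^'q^'q) < 1"
proof -
  obtain a b :: 'q where ab: "a \<noteq> b"
    using assms(2) by (metis card_2_iff' card_le_Suc_iff numeral_2_eq_2 ex_in_conv UNIV_I)
  fix c :: 'q
  have "U $ c $ a + U $ c $ b \<le> (\<Sum>y\<in>UNIV. U $ c $ y)"
  proof -
    have "U $ c $ a + U $ c $ b = (\<Sum>y\<in>{a, b}. U $ c $ y)" using ab by simp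
    also have "... \<le> (\<Sum>y\<in>UNIV. U $ c $ y)"
      using assms(1) by (intro sum_mono2) (auto simp: row_stochastic_def)
    finally show ?thesis .
  qed
  then have "U $ c $ a + U $ c $ b \<le> 1" using assms(1) by (simp add: row_stochastic_def)
  moreover have "umin U \<le> U $ c $ a" "umin U \<le> U $ c $ b" by (rule umin_le)+
  moreover have "0 \<le> U $ c $ a" "0 \<le> U $ c $ b" using assms(1) by (auto simp: row_stochastic_def)
  ultimately show ?thesis by linarith
qed

lemma stoch_le1:
  assumes "row_stochastic U" shows "U $ a $ c \<le> (1::real)"
proof -
  have "U $ a $ c \<le> (\<Sum>y\<in>UNIV. U $ a $ y)"
    using assms by (intro member_le_sum) (auto simp: row_stochastic_def)
  then show ?thesis using assms by (simp add: row_stochastic_def)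
qed

lemma stoch_ge0: "row_stochastic U \<Longrightarrow> 0 \<le> U $ a $ c"
  by (simp add: row_stochastic_def)

lemma word_step:
  fixes U :: "real^'q::finite^'q"
  assumes st: "row_stochastic U" and pos: "\<forall>x y. U $ x $ y > 0" and q2: "CARD('q) \<ge> 2"
    and A: "A \<subseteq> words (Suc (length w))"
  shows "\<bar>Pr U (b # w) A - Pr U (a # w) A\<bar> \<le> 1 / sqrt (real (cnt (b # w) b) * umin U)"
proof -
  define m where "m = cnt (b # w) b"
  define z where "z = filter (\<lambda>c. c \<noteq> b) w"
  have m1: "m \<ge> 1" by (simp add: m_def cnt_def)
  have ms1: "mset (b # w) = mset (replicate m b @ z)"
    by (rule multiset_eqI) (auto simp: m_def z_def cnt_def mset_filter)
  have ms2: "mset (a # w) = mset (a # replicate (m - 1) b @ z)"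
    by (rule multiset_eqI) (auto simp: m_def z_def cnt_def mset_filter)
  have lenz: "m + length z = Suc (length w)"
  proof -
    have "size (mset (b # w)) = size (mset (replicate m b @ z))" using ms1 by simp
    then show ?thesis by simp
  qed
  have e1: "Pr U (b # w) A = (\<Sum>y\<in>A. PCL (replicate m (rowv U b) @ map (rowv U) z) y)"
    using Pr_mset[OF ms1, of U A] unfolding Pr_PCL by simp
  have e2: "Pr U (a # w) A = (\<Sum>y\<in>A. PCL (rowv U a # replicate (m-1) (rowv U b) @ map (rowv U) z) y)"
    using Pr_mset[OF ms2, of U A] unfolding Pr_PCL by simp
  have p: "0 < umin U" "umin U < 1" using umin_pos[OF pos] umin_lt1[OF st q2] by auto
  have dom: "umin U * rowv U a c \<le> rowv U b c" for c
  proof -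
    have "umin U * rowv U a c \<le> umin U * 1"
      using p stoch_le1[OF st] unfolding rowv_def
      by (intro mult_left_mono) auto
    also have "... \<le> rowv U b c" using umin_le by (simp add: rowv_def)
    finally show ?thesis .
  qed
  show ?thesis unfolding e1 e2 m_def[symmetric]
    by (rule PCL_step[OF probvec_row[OF st] probvec_row[OF st] _ p dom m1])
       (use st probvec_row A lenz in auto)
qed

lemma cnt_Cons: "cnt (a # x) e = cnt x e + (if e = a then 1 else 0)"
  by (simp add: cnt_def)

lemma sum_cnt: "(\<Sum>e\<in>UNIV. cnt (x :: 'q::finite list) e) = length x"
proof (induction x)
  case Nil then show ?case by (simp add: cnt_def)
next
  case (Cons a x)
  have "(\<Sum>e\<in>UNIV. cnt (a # x) e) = (\<Sum>e\<in>UNIV. cnt x e) + (\<Sum>e\<in>UNIV. (if e = a then 1 else 0))"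
    unfolding cnt_Cons by (rule sum.distrib)
  also have "(\<Sum>e\<in>UNIV. (if e = a then 1 else 0 :: nat)) = 1" by simp
  finally show ?case using Cons by simp
qed

lemma exists_more:
  fixes x x' :: "'q::finite list"
  assumes "length x = length x'" "mset x \<noteq> mset x'"
  shows "\<exists>a. cnt x a > cnt x' a"
proof (rule ccontr)
  assume "\<not> ?thesis"
  then have le: "\<forall>a. cnt x a \<le> cnt x' a" by (auto simp: not_less)
  have "\<forall>a. cnt x a = cnt x' a"
  proof (rule ccontr)
    assume "\<not> (\<forall>a. cnt x a = cnt x' a)"
    then obtain e where "cnt x e < cnt x' e" using le le_neq_implies_less by blast
    then have "(\<Sum>e\<in>UNIV. cnt x e) < (\<Sum>e\<in>UNIV. cnt x' e)"
      using le by (intro sum_strict_mono_ex1) auto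
    then show False using sum_cnt[of x] sum_cnt[of x'] assms(1) by simp
  qed
  then have "mset x = mset x'" by (intro multiset_eqI) (simp add: cnt_def)
  then show False using assms(2) by simp
qed

lemma dnat_step:
  fixes x x' :: "'q::finite list"
  assumes a: "cnt x a > cnt x' a" and c: "cnt x c < cnt x' c" and ax: "a \<in> set x"
  shows "dnat x x' = dnat (c # remove1 a x) x' + 2"
proof -
  have ac: "a \<noteq> c" using a c by auto
  have cx1: "cnt (c # remove1 a x) e = cnt x e - (if e = a then 1 else 0) + (if e = c then 1 else 0)" for e
    using ax by (auto simp: cnt_def)
  define T where "T y e = (cnt y e - cnt x' e) + (cnt x' e - cnt y e)" for y e
  have "T x e = T (c # remove1 a x) e + (if e = a then 1 else 0) + (if e = c then 1 else 0)" for e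
    using a c ac unfolding T_def cx1 by auto
  then have "(\<Sum>e\<in>UNIV. T x e) = (\<Sum>e\<in>UNIV. T (c # remove1 a x) e) + (\<Sum>e\<in>UNIV. (if e = a then 1 else 0))
      + (\<Sum>e\<in>UNIV. (if e = c then 1 else 0))"
    by (simp add: sum.distrib)
  then show ?thesis unfolding dnat_def T_def by simp
qed

lemma kappa_mono:
  assumes "0 < M" "M \<le> m" "0 < (u::real)"
  shows "1 / sqrt (m * u) \<le> 1 / sqrt (M * u)"
  using assms by (intro divide_left_mono real_sqrt_le_mono mult_right_mono) (auto intro: mult_pos_pos)

lemma chain:
  fixes U :: "real^'q::finite^'q"
  assumes st: "row_stochastic U" and pos: "\<forall>x y. U $ x $ y > 0" and q2: "CARD('q) \<ge> 2"
    and A: "A \<subseteq> words n" and M: "M > 0"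
  shows "length x = n \<Longrightarrow> length x' = n \<Longrightarrow> real (cnt x b) \<ge> M \<Longrightarrow> real (cnt x' b) \<ge> M \<Longrightarrow>
    \<bar>Pr U x A - Pr U x' A\<bar> \<le> real (dnat x x') / sqrt (M * umin U)"
proof (induction "dnat x x'" arbitrary: x rule: less_induct)
  case less
  have up: "umin U > 0" using umin_pos[OF pos] .
  define K where "K = 1 / sqrt (M * umin U)"
  have K0: "K \<ge> 0" using M up by (simp add: K_def)
  show ?case
  proof (cases "mset x = mset x'")
    case True
    then show ?thesis using Pr_mset[OF True, of U A] M up by simp
  next
    case False
    obtain a where a: "cnt x a > cnt x' a" using exists_more[OF _ False] less.prems by auto
    obtain c where c: "cnt x' c > cnt x c" using exists_more[of x' x] False less.prems by auto
    have ax: "a \<in> set x"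
    proof (rule ccontr)
      assume "a \<notin> set x"
      then have "cnt x a = 0" by (simp add: cnt_def count_mset_0_iff)
      then show False using a by simp
    qed
    define w where "w = remove1 a x"
    have mx: "mset x = mset (a # w)" using ax by (simp add: w_def)
    have lw: "Suc (length w) = n" using less.prems(1) ax by (simp add: w_def length_remove1)
       (metis Suc_pred length_pos_if_in_set)
    have A': "A \<subseteq> words (Suc (length w))" using A lw by simp
    have cw: "cnt w e = cnt x e - (if e = a then 1 else 0)" for e
      using ax by (simp add: w_def cnt_def)
    have stp: "\<bar>Pr U (b # w) A - Pr U (e # w) A\<bar> \<le> K" if "real (cnt (b # w) b) \<ge> M" for e
    proof -
      have "\<bar>Pr U (b # w) A - Pr U (e # w) A\<bar> \<le> 1 / sqrt (real (cnt (b # w) b) * umin U)"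
        by (rule word_step[OF st pos q2 A'])
      also have "... \<le> K" unfolding K_def by (rule kappa_mono[OF M that up])
      finally show ?thesis .
    qed
    have step: "\<bar>Pr U x A - Pr U (c # w) A\<bar> \<le> 2 * K"
    proof (cases "a = b")
      case True
      have "cnt (b # w) b = cnt x b" using cw True ax a by (simp add: cnt_Cons)
      then have "\<bar>Pr U (b # w) A - Pr U (c # w) A\<bar> \<le> K" using stp less.prems(3) by simp
      then show ?thesis using Pr_mset[OF mx, of U A] True K0 by simp
    next
      case False
      have "cnt (b # w) b = cnt x b + 1" using cw False by (simp add: cnt_Cons)
      then have h: "real (cnt (b # w) b) \<ge> M" using less.prems(3) by simp
      have "\<bar>Pr U (a # w) A - Pr U (c # w) A\<bar>
          \<le> \<bar>Pr U (b # w) A - Pr U (a # w) A\<bar> + \<bar>Pr U (b # w) A - Pr U (c # w) A\<bar>" by linarith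
      also have "... \<le> 2 * K" using stp[OF h, of a] stp[OF h, of c] by simp
      finally show ?thesis using Pr_mset[OF mx, of U A] by simp
    qed
    have d: "dnat x x' = dnat (c # w) x' + 2" unfolding w_def by (rule dnat_step[OF a c ax])
    have cb: "real (cnt (c # w) b) \<ge> M"
    proof (cases "a = b")
      case True
      then have "cnt (c # w) b \<ge> cnt x' b" using a cw by (simp add: cnt_Cons)
      then show ?thesis using less.prems(4) by linarith
    next
      case False
      then have "cnt (c # w) b \<ge> cnt x b" using cw by (simp add: cnt_Cons)
      then show ?thesis using less.prems(3) by linarith
    qed
    have IH: "\<bar>Pr U (c # w) A - Pr U x' A\<bar> \<le> real (dnat (c # w) x') / sqrt (M * umin U)"
      by (rule less.hyps) (use d lw less.prems cb in auto)
    have "\<bar>Pr U x A - Pr U x' A\<bar> \<le> 2 * K + real (dnat (c # w) x') * K"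
      using step IH unfolding K_def by simp
    also have "... = real (dnat x x') * K" using d by (simp add: algebra_simps)
    finally show ?thesis by (simp add: K_def)
  qed
qed

lemma perm_channel_sum1:
  fixes U :: "real^'q::finite^'q"
  assumes st: "row_stochastic U" and len: "length x = n"
  shows "(\<Sum>y\<in>words n. perm_channel U n x y) = 1"
proof -
  have "(\<Sum>y\<in>words n. perm_channel U n x y) = (\<Sum>y\<in>words n. PCL (map (rowv U) x) y)"
    unfolding rowv_def by (intro sum.cong refl perm_channel_PCL len)
  also have "... = 1" by (rule PCL_sum1) (use st probvec_row len in auto)
  finally show ?thesis .
qed

lemma perm_channel_nonneg:
  fixes U :: "real^'q::finite^'q"
  assumes st: "row_stochastic U" and len: "length x = n"
  shows "0 \<le> perm_channel U n x y"
proof -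
  have "perm_channel U n x y = PCL (map (rowv U) x) y"
    unfolding rowv_def by (intro perm_channel_PCL len)
  also have "... \<ge> 0" by (rule PCL_nonneg) (use st probvec_row in auto)
  finally show ?thesis .
qed

lemma lambda_sum_ge:
  fixes U :: "real^'q::finite^'q"
  assumes code: "det_ID_code n L enc dec" and ij: "i < L" "j < L" "i \<noteq> j"
    and st: "row_stochastic U"
  shows "lambda1 U n L enc dec + lambda2 U n L enc dec
      \<ge> 1 - \<bar>Pr U (enc i) (dec i) - Pr U (enc j) (dec i)\<bar>"
proof -
  have li: "length (enc i) = n" and lj: "length (enc j) = n" and di: "dec i \<subseteq> words n"
    using code ij unfolding det_ID_code_def words_def by auto
  have "err_miss U n enc dec i \<le> lambda1 U n L enc dec"
    unfolding lambda1_def using ij by (intro Max_ge) auto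
  moreover have "err_false U n enc dec j i \<le> lambda2 U n L enc dec"
  proof -
    have fin: "finite {(i, j). i < L \<and> j < L \<and> i \<noteq> j}"
      by (rule finite_subset[of _ "{..<L} \<times> {..<L}"]) auto
    have "err_false U n enc dec j i \<in> (\<lambda>(i, j). err_false U n enc dec i j) ` {(i, j). i < L \<and> j < L \<and> i \<noteq> j}"
      using ij by (intro image_eqI[where x = "(j, i)"]) auto
    then show ?thesis unfolding lambda2_def using fin by (intro Max_ge) auto
  qed
  moreover have "err_miss U n enc dec i = 1 - Pr U (enc i) (dec i)"
  proof -
    have "(\<Sum>y\<in>words n. perm_channel U n (enc i) y)
        = (\<Sum>y\<in>words n - dec i. perm_channel U n (enc i) y) + (\<Sum>y\<in>dec i. perm_channel U n (enc i) y)"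
      using di by (metis Diff_partition finite_words sum.subset_diff)
    then show ?thesis using perm_channel_sum1[OF st li]
      unfolding err_miss_def Pr_def li by simp
  qed
  moreover have "err_false U n enc dec j i = Pr U (enc j) (dec i)"
    unfolding err_false_def Pr_def lj by simp
  ultimately show ?thesis by linarith
qed

lemma div_eq_close:
  assumes "(m::nat) div s = k div s" "s > 0"
  shows "\<bar>int m - int k\<bar> < int s"
proof -
  have "m = s * (k div s) + m mod s" using assms(1) mult_div_mod_eq[of s m] by simp
  moreover have "k = s * (k div s) + k mod s" by simp
  moreover have "m mod s < s" "k mod s < s" using assms by simp_all
  ultimately show ?thesis by linarith
qed

lemma dnat_int: "int (dnat x x') = (\<Sum>e\<in>UNIV. \<bar>int (cnt x e) - int (cnt x' e)\<bar>)"
  unfolding dnat_def of_nat_sum by (intro sum.cong refl) auto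

lemma pigeon:
  fixes enc :: "nat \<Rightarrow> 'q::finite list"
  assumes len: "\<forall>i<L. length (enc i) = n" and s: "s > 0"
    and L: "L > (n div s + 1) ^ (CARD('q) - 1)"
  shows "\<exists>i j. i < L \<and> j < L \<and> i \<noteq> j \<and> dnat (enc i) (enc j) \<le> 2 * (CARD('q) - 1) * s"
proof -
  obtain a0 :: 'q where True by simp
  define box where "box x = (\<lambda>a. if a = a0 then 0 else cnt x a div s)" for x
  define B where "B = {f. f a0 = 0 \<and> (\<forall>a. f a \<le> n div s)}"
  have cnt_le: "cnt x a \<le> length x" for x :: "'q list" and a
    using sum_cnt[of x] member_le_sum[of a UNIV "cnt x"] by simp
  have inB: "box (enc i) \<in> B" if "i < L" for i
  proof -
    have "cnt (enc i) a div s \<le> n div s" for a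
      using cnt_le[of "enc i" a] len that by (intro div_le_mono) auto
    then show ?thesis unfolding B_def box_def by auto
  qed
  have cardB: "card B \<le> (n div s + 1) ^ (CARD('q) - 1)"
  proof -
    have "card B \<le> card (PiE (UNIV - {a0}) (\<lambda>_. {..n div s}))"
    proof (rule card_inj_on_le)
      show "inj_on (\<lambda>f. restrict f (UNIV - {a0})) B"
        unfolding B_def inj_on_def by (auto simp: restrict_def fun_eq_iff) metis
      show "(\<lambda>f. restrict f (UNIV - {a0})) ` B \<subseteq> PiE (UNIV - {a0}) (\<lambda>_. {..n div s})"
        unfolding B_def by (auto simp: restrict_def PiE_def Pi_def extensional_def)
    qed (simp add: finite_PiE)
    also have "... = (n div s + 1) ^ (CARD('q) - 1)"
      by (simp add: card_PiE card_Diff_singleton)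
    finally show ?thesis .
  qed
  have finB: "finite B"
  proof -
    have "B \<subseteq> {f. \<forall>a. f a \<in> {..n div s}}" unfolding B_def by auto
    moreover have "finite {f :: 'q \<Rightarrow> nat. \<forall>a. f a \<in> {..n div s}}"
      using finite_PiE[of "UNIV :: 'q set" "\<lambda>_. {..n div s}"] by (simp add: PiE_UNIV_domain Pi_def)
    ultimately show ?thesis by (rule finite_subset)
  qed
  have "\<not> inj_on (\<lambda>i. box (enc i)) {..<L}"
  proof
    assume "inj_on (\<lambda>i. box (enc i)) {..<L}"
    then have "card {..<L} \<le> card B"
      using inB finB by (intro card_inj_on_le) auto
    then show False using cardB L by simp
  qed
  then obtain i j where ij: "i < L" "j < L" "i \<noteq> j" "box (enc i) = box (enc j)"
    unfolding inj_on_def by auto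
  define D where "D e = int (cnt (enc i) e) - int (cnt (enc j) e)" for e
  have Dsmall: "\<bar>D e\<bar> \<le> int s" if "e \<noteq> a0" for e
  proof -
    have "cnt (enc i) e div s = cnt (enc j) e div s"
    proof -
      have "box (enc i) e = box (enc j) e" using ij(4) by simp
      then show ?thesis unfolding box_def using that by simp
    qed
    then show ?thesis unfolding D_def using div_eq_close[OF _ s] by fastforce
  qed
  have sumD: "(\<Sum>e\<in>UNIV. D e) = 0"
  proof -
    have si: "(\<Sum>e\<in>UNIV. int (cnt (enc i) e)) = int n" using len ij by (metis of_nat_sum sum_cnt)
    have sj: "(\<Sum>e\<in>UNIV. int (cnt (enc j) e)) = int n" using len ij by (metis of_nat_sum sum_cnt)
    show ?thesis unfolding D_def sum_subtractf si sj by simp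
  qed
  have split: "(\<Sum>e\<in>UNIV. f e) = f a0 + (\<Sum>e\<in>UNIV - {a0}. f e)" for f :: "'q \<Rightarrow> int"
    by (rule sum.remove) auto
  have "D a0 = - (\<Sum>e\<in>UNIV - {a0}. D e)" using sumD split[of D] by simp
  then have "\<bar>D a0\<bar> \<le> (\<Sum>e\<in>UNIV - {a0}. \<bar>D e\<bar>)" using sum_abs[of D "UNIV - {a0}"] by simp
  then have "(\<Sum>e\<in>UNIV. \<bar>D e\<bar>) \<le> 2 * (\<Sum>e\<in>UNIV - {a0}. \<bar>D e\<bar>)"
    using split[of "\<lambda>e. \<bar>D e\<bar>"] by simp
  also have "... \<le> 2 * (\<Sum>e\<in>UNIV - {a0}. int s)"
    using Dsmall by (intro mult_left_mono sum_mono) auto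
  also have "... = 2 * (int (CARD('q)) - 1) * int s"
    by (simp add: card_Diff_singleton)
  finally have "int (dnat (enc i) (enc j)) \<le> 2 * (int (CARD('q)) - 1) * int s"
    unfolding dnat_int D_def by simp
  moreover have "int (2 * (CARD('q) - 1) * s) = 2 * (int (CARD('q)) - 1) * int s"
  proof -
    have cq: "CARD('q) \<ge> 1" using finite_UNIV_card_ge_0[where 'a='q] by simp
    then show ?thesis by (simp add: of_nat_diff)
  qed
  ultimately have "dnat (enc i) (enc j) \<le> 2 * (CARD('q) - 1) * s"
    by (metis of_nat_le_iff)
  then show ?thesis using ij by blast
qed

lemma majority:
  fixes x :: "'q::finite list"
  shows "\<exists>b. real (cnt x b) \<ge> real (length x) / real CARD('q)"
proof (rule ccontr)
  assume "\<not> ?thesis"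
  then have lt: "\<forall>b. real (cnt x b) < real (length x) / real CARD('q)" by (simp add: not_le)
  have "(\<Sum>b\<in>UNIV. real (cnt x b)) < (\<Sum>b\<in>(UNIV::'q set). real (length x) / real CARD('q))"
    using lt by (intro sum_strict_mono) auto
  also have "... = real (length x)" by simp
  moreover have "(\<Sum>b\<in>UNIV. real (cnt x b)) = real (length x)"
    by (simp only: of_nat_sum[symmetric] sum_cnt)
  ultimately show False by simp
qed

lemma converse_core:
  fixes U :: "real^'q::finite^'q"
  assumes st: "row_stochastic U" and pos: "\<forall>x y. U $ x $ y > 0" and q2: "CARD('q) \<ge> 2"
    and code: "det_ID_code n L enc dec" and s: "s \<ge> 1"
    and L: "L > (n div s + 1) ^ (CARD('q) - 1)"
    and Mpos: "real n / real CARD('q) - 2 * (real CARD('q) - 1) * real s > 0"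
  shows "lambda1 U n L enc dec + lambda2 U n L enc dec \<ge>
     1 - 2 * (real CARD('q) - 1) * real s /
         sqrt ((real n / real CARD('q) - 2 * (real CARD('q) - 1) * real s) * umin U)"
proof -
  define M where "M = real n / real CARD('q) - 2 * (real CARD('q) - 1) * real s"
  have len: "\<forall>i<L. length (enc i) = n" using code by (auto simp: det_ID_code_def words_def)
  obtain i j where ij: "i < L" "j < L" "i \<noteq> j" and d: "dnat (enc i) (enc j) \<le> 2 * (CARD('q) - 1) * s"
    using pigeon[OF len _ L] s by auto
  have dr: "real (dnat (enc i) (enc j)) \<le> 2 * (real CARD('q) - 1) * real s"
  proof -
    have "real (dnat (enc i) (enc j)) \<le> real (2 * (CARD('q) - 1) * s)" using d by linarith
    also have "... = 2 * (real CARD('q) - 1) * real s" using q2 by (simp add: of_nat_diff)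
    finally show ?thesis .
  qed
  obtain b where b: "real (cnt (enc i) b) \<ge> real n / real CARD('q)"
    using majority[of "enc i"] len ij(1) by metis
  have "\<bar>int (cnt (enc i) b) - int (cnt (enc j) b)\<bar> \<le> int (dnat (enc i) (enc j))"
    unfolding dnat_int by (rule member_le_sum[where f = "\<lambda>e. \<bar>int (cnt (enc i) e) - int (cnt (enc j) e)\<bar>"]) auto
  then have "real (cnt (enc j) b) \<ge> real (cnt (enc i) b) - real (dnat (enc i) (enc j))"
    by linarith
  then have bj: "real (cnt (enc j) b) \<ge> M" using b dr unfolding M_def by linarith
  have "2 * (real CARD('q) - 1) * real s \<ge> 0" using q2 by simp
  then have bi: "real (cnt (enc i) b) \<ge> M" using b unfolding M_def by linarith
  have A: "dec i \<subseteq> words n" using code ij by (auto simp: det_ID_code_def)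
  have up: "umin U > 0" by (rule umin_pos[OF pos])
  have "\<bar>Pr U (enc i) (dec i) - Pr U (enc j) (dec i)\<bar> \<le> real (dnat (enc i) (enc j)) / sqrt (M * umin U)"
    by (rule chain[OF st pos q2 A]) (use Mpos len ij bi bj in \<open>auto simp: M_def\<close>)
  also have "... \<le> 2 * (real CARD('q) - 1) * real s / sqrt (M * umin U)"
    using dr Mpos up unfolding M_def by (intro divide_right_mono) auto
  finally show ?thesis using lambda_sum_ge[OF code ij st] unfolding M_def by linarith
qed

lemma converse_bound:
  fixes U :: "real^'q::finite^'q"
  assumes st: "row_stochastic U" and pos: "\<forall>x y. U $ x $ y > 0" and q2: "CARD('q) \<ge> 2"
  shows "\<exists>N0 Kc. Kc > 0 \<and> (\<forall>n L enc dec (c::real). n \<ge> N0 \<longrightarrow> c \<ge> 1 \<longrightarrow> det_ID_code n L enc dec \<longrightarrow>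
     real L \<ge> c * real n powr ((real CARD('q) - 1) / 2)
                   * (log 2 (real n)) ^ ((CARD('q) - 1) * (CARD('q) - 2) div 2) \<longrightarrow>
     lambda1 U n L enc dec + lambda2 U n L enc dec \<ge> 1 - Kc * (1 / c powr (1 / (real CARD('q) - 1)) + 1 / sqrt (real n)))"
proof -
  define Q where "Q = real CARD('q)"
  define d where "d = Q - 1"
  define \<mu> where "\<mu> = umin U"
  define W where "W = 4 * Q * d"
  define N0 :: nat where "N0 = nat \<lceil>9 * W^2\<rceil> + 5"
  define Kc where "Kc = 4 * d * sqrt (2 * Q / \<mu>)"
  have Q2: "Q \<ge> 2" using q2 unfolding Q_def by simp
  have d1: "d \<ge> 1" using Q2 unfolding d_def by simp
  have mu: "\<mu> > 0" unfolding \<mu>_def by (rule umin_pos[OF pos])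
  have W1: "W \<ge> 1" unfolding W_def using Q2 d1 by (simp add: mult_ge1_I)
  have Kc0: "Kc > 0" unfolding Kc_def using d1 Q2 mu by simp
  have dnat: "real (CARD('q) - 1) = d" using q2 unfolding d_def Q_def by (simp add: of_nat_diff)
  have main: "lambda1 U n L enc dec + lambda2 U n L enc dec \<ge> 1 - Kc * (1 / c powr (1 / d) + 1 / sqrt (real n))"
    if n: "n \<ge> N0" and c: "c \<ge> 1" and code: "det_ID_code n L enc dec"
      and hL0: "real L \<ge> c * real n powr (d / 2) * (log 2 (real n)) ^ ((CARD('q) - 1) * (CARD('q) - 2) div 2)"
    for n L enc dec and c :: real
  proof -
    have n5: "real n \<ge> 5" using n unfolding N0_def by simp
    have nW: "sqrt (real n) \<ge> 3 * W"
    proof -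
      have "real n \<ge> 9 * W^2" using n unfolding N0_def by linarith
      then have "(3 * W)^2 \<le> real n" by (simp add: power_mult_distrib)
      then show ?thesis by (rule real_le_rsqrt)
    qed
    have sn1: "sqrt (real n) \<ge> 1" using n5 by simp
    have lg: "log 2 (real n) \<ge> 1" using n5 by simp
    have hL: "real L \<ge> c * real n powr (d / 2)"
    proof -
      have "c * real n powr (d / 2) * 1 \<le> c * real n powr (d / 2) * (log 2 (real n)) ^ ((CARD('q) - 1) * (CARD('q) - 2) div 2)"
        using c lg by (intro mult_left_mono one_le_power) auto
      then show ?thesis using hL0 by simp
    qed
    define c' where "c' = c powr (1 / d)"
    have c'1: "c' \<ge> 1" unfolding c'_def using c d1 by (simp add: ge_one_powr_ge_zero)
    define T where "T = real L powr (1 / d)"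
    have T: "T \<ge> c' * sqrt (real n)"
    proof -
      have "(c * real n powr (d / 2)) powr (1 / d) \<le> real L powr (1 / d)"
        using hL c d1 by (intro powr_mono2) auto
      moreover have "(c * real n powr (d / 2)) powr (1 / d) = c' * sqrt (real n)"
        unfolding c'_def using c d1 by (simp add: powr_mult powr_powr powr_half_sqrt[symmetric])
      ultimately show ?thesis unfolding T_def by simp
    qed
    have T2: "T > 2"
    proof -
      have "sqrt (real n) > 2" using n5 by (simp add: real_less_rsqrt)
      moreover have "c' * sqrt (real n) \<ge> sqrt (real n)" using c'1 mult_right_mono[of 1 c' "sqrt (real n)"] by simp
      ultimately show ?thesis using T by linarith
    qed
    have Lpos: "real L > 0" using T2 unfolding T_def by (cases "L = 0") auto
    have TL: "T ^ (CARD('q) - 1) = real L"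
    proof -
      have "T ^ (CARD('q) - 1) = real L powr ((1 / d) * real (CARD('q) - 1))"
        unfolding T_def using Lpos by (simp add: powr_realpow[symmetric] powr_powr)
      also have "... = real L" using d1 dnat by simp
      finally show ?thesis .
    qed
    define s where "s = nat \<lceil>2 * real n / T\<rceil>"
    have sge: "real s \<ge> 2 * real n / T" unfolding s_def by linarith
    have spos: "2 * real n / T > 0" using n5 T2 by simp
    have s1: "s \<ge> 1" using spos unfolding s_def by linarith
    have sle: "real s \<le> 2 * sqrt (real n) / c' + 1"
    proof -
      have "real s \<le> 2 * real n / T + 1" unfolding s_def using spos by linarith
      also have "2 * real n / T \<le> 2 * real n / (c' * sqrt (real n))"
        using T c'1 sn1 n5 T2 by (intro divide_left_mono) auto
      also have "2 * real n / (c' * sqrt (real n)) = 2 * sqrt (real n) / c'"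
        using c'1 sn1 by (simp add: field_simps)
      finally show ?thesis by simp
    qed
    have sle2: "real s \<le> 2 * sqrt (real n) + 1"
    proof -
      have "2 * sqrt (real n) / c' \<le> 2 * sqrt (real n)" using c'1 sn1 by (simp add: field_simps)
      then show ?thesis using sle by linarith
    qed
    have pig: "L > (n div s + 1) ^ (CARD('q) - 1)"
    proof -
      have "real (n div s) \<le> real n / real s" by (rule of_nat_div_le_of_nat)
      also have "... \<le> T / 2" using sge spos T2 s1 by (simp add: field_simps)
      finally have "real (n div s + 1) < T" using T2 by simp
      then have "real (n div s + 1) ^ (CARD('q) - 1) < T ^ (CARD('q) - 1)"
        using q2 by (intro power_strict_mono) auto
      then show ?thesis unfolding TL by (metis of_nat_less_iff of_nat_power)
    qed
    have sW: "2 * d * real s \<le> real n / (2 * Q)"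
    proof -
      have e: "real n / W = sqrt (real n) * (sqrt (real n) / W)"
        unfolding times_divide_eq_right by simp
      have "sqrt (real n) / W \<ge> 3" using nW W1 by (simp add: field_simps)
      then have "sqrt (real n) * (sqrt (real n) / W) \<ge> sqrt (real n) * 3"
        using sn1 by (intro mult_left_mono) auto
      then have "real n / W \<ge> 3 * sqrt (real n)" unfolding e by simp
      moreover have "3 * sqrt (real n) \<ge> real s" using sle2 sn1 by linarith
      ultimately have "real s \<le> real n / W" by linarith
      then show ?thesis unfolding W_def using Q2 d1 by (simp add: field_simps)
    qed
    have Mge: "real n / Q - 2 * d * real s \<ge> real n / (2 * Q)" using sW Q2 by (simp add: field_simps)
    have Mpos: "real n / real CARD('q) - 2 * (real CARD('q) - 1) * real s > 0"
      using Mge n5 Q2 unfolding Q_def d_def by (smt (verit) divide_pos_pos)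
    note core = converse_core[OF st pos q2 code s1 pig Mpos]
    have "2 * d * real s / sqrt ((real n / Q - 2 * d * real s) * \<mu>)
       \<le> 2 * d * (2 * sqrt (real n) / c' + 1) / sqrt ((real n / (2 * Q)) * \<mu>)"
      using sle Mge mu d1 n5 Q2 s1
      by (intro frac_le mult_left_mono real_sqrt_le_mono mult_right_mono) auto
    also have "... = 2 * d * sqrt (2 * Q / \<mu>) * (2 / c' + 1 / sqrt (real n))"
    proof -
      have "sqrt ((real n / (2 * Q)) * \<mu>) = sqrt (real n) / sqrt (2 * Q / \<mu>)"
        using mu Q2 by (simp add: real_sqrt_divide real_sqrt_mult field_simps)
      then show ?thesis using mu Q2 sn1 c'1 by (simp add: field_simps)
    qed
    also have "... \<le> Kc * (1 / c' + 1 / sqrt (real n))"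
    proof -
      have "1 / sqrt (real n) \<le> 2 / sqrt (real n)" using sn1 by (intro divide_right_mono) auto
      then have "2 / c' + 1 / sqrt (real n) \<le> 2 * (1 / c' + 1 / sqrt (real n))" by simp
      then show ?thesis unfolding Kc_def using d1 mu Q2
        by (simp add: mult.assoc)
    qed
    finally have "2 * d * real s / sqrt ((real n / Q - 2 * d * real s) * \<mu>) \<le> Kc * (1 / c' + 1 / sqrt (real n))" .
    then show ?thesis using core unfolding Q_def d_def \<mu>_def c'_def by linarith
  qed
  show ?thesis
    by (rule exI[of _ N0], rule exI[of _ Kc]) (use Kc0 main in \<open>auto simp: d_def Q_def\<close>)
qed

lemma liminf_ge_from_bound:
  fixes f e :: "nat \<Rightarrow> real"
  assumes ev: "eventually (\<lambda>i. f i \<ge> 1 - e i) sequentially" and e: "e \<longlonglongrightarrow> 0"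
  shows "liminf (\<lambda>i. ereal (f i)) \<ge> 1"
proof -
  have "(\<lambda>i. ereal (1 - e i)) \<longlonglongrightarrow> ereal (1 - 0)"
    by (intro tendsto_intros e)
  then have "liminf (\<lambda>i. ereal (1 - e i)) = ereal (1 - 0)" by (intro lim_imp_Liminf) auto
  moreover have "liminf (\<lambda>i. ereal (1 - e i)) \<le> liminf (\<lambda>i. ereal (f i))"
    by (rule Liminf_mono) (use ev in \<open>auto elim: eventually_mono\<close>)
  ultimately show ?thesis by (simp add: one_ereal_def)
qed

lemma inv_sqrt_tendsto:
  assumes "filterlim ns at_top sequentially"
  shows "(\<lambda>i. 1 / sqrt (real (ns i :: nat))) \<longlonglongrightarrow> 0"
proof -
  have r: "filterlim (\<lambda>i. real (ns i)) at_top sequentially"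
    by (rule filterlim_compose[OF filterlim_real_sequentially assms])
  have "filterlim (\<lambda>i. sqrt (real (ns i))) at_top sequentially"
    by (rule filterlim_compose[OF sqrt_at_top r])
  then have "(\<lambda>i. inverse (sqrt (real (ns i)))) \<longlonglongrightarrow> 0" by (rule tendsto_inverse_0_at_top)
  then show ?thesis by (simp add: divide_inverse)
qed

lemma inv_powr_tendsto:
  assumes "filterlim cs at_top sequentially" "a > 0"
  shows "(\<lambda>i. 1 / (cs i :: real) powr a) \<longlonglongrightarrow> 0"
proof -
  have "(\<lambda>i. cs i powr (- a)) \<longlonglongrightarrow> 0"
    by (rule tendsto_neg_powr) (use assms in auto)
  then show ?thesis by (simp add: powr_minus_divide)
qed

lemma part3:
  fixes U :: "real^'q::finite^'q"
  assumes q2: "CARD('q) \<ge> 2" and st: "row_stochastic U"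
  shows "(\<forall>x y. U $ x $ y > 0) \<longrightarrow>
      (\<forall>(ns :: nat \<Rightarrow> nat) (cs :: nat \<Rightarrow> real) (L :: nat \<Rightarrow> nat) (enc :: nat \<Rightarrow> nat \<Rightarrow> 'q list) dec.
         filterlim ns at_top sequentially \<longrightarrow> filterlim cs at_top sequentially \<longrightarrow>
         (\<forall>i. det_ID_code (ns i) (L i) (enc i) (dec i) \<and>
              real (L i) \<ge> cs i * real (ns i) powr ((real CARD('q) - 1) / 2)
                            * (log 2 (real (ns i))) ^ ((CARD('q) - 1) * (CARD('q) - 2) div 2)) \<longrightarrow>
         liminf (\<lambda>i. ereal (lambda1 U (ns i) (L i) (enc i) (dec i)
                            + lambda2 U (ns i) (L i) (enc i) (dec i))) \<ge> 1)"
proof (intro impI allI)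
  fix ns :: "nat \<Rightarrow> nat" and cs :: "nat \<Rightarrow> real" and L :: "nat \<Rightarrow> nat"
    and enc :: "nat \<Rightarrow> nat \<Rightarrow> 'q list" and dec
  assume pos: "\<forall>x y. U $ x $ y > 0" and ns: "filterlim ns at_top sequentially"
    and cs: "filterlim cs at_top sequentially"
    and codes: "\<forall>i. det_ID_code (ns i) (L i) (enc i) (dec i) \<and>
              real (L i) \<ge> cs i * real (ns i) powr ((real CARD('q) - 1) / 2)
                            * (log 2 (real (ns i))) ^ ((CARD('q) - 1) * (CARD('q) - 2) div 2)"
  obtain N0 Kc where Kc: "Kc > 0" and bnd: "\<And>n L enc dec (c::real). n \<ge> N0 \<Longrightarrow> c \<ge> 1 \<Longrightarrow> det_ID_code n L enc dec \<Longrightarrow>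
     real L \<ge> c * real n powr ((real CARD('q) - 1) / 2)
                   * (log 2 (real n)) ^ ((CARD('q) - 1) * (CARD('q) - 2) div 2) \<Longrightarrow>
     lambda1 U n L enc dec + lambda2 U n L enc dec \<ge> 1 - Kc * (1 / c powr (1 / (real CARD('q) - 1)) + 1 / sqrt (real n))"
    using converse_bound[OF st pos q2] by blast
  define e where "e i = Kc * (1 / cs i powr (1 / (real CARD('q) - 1)) + 1 / sqrt (real (ns i)))" for i
  have a: "1 / (real CARD('q) - 1) > 0" using q2 by simp
  have "e \<longlonglongrightarrow> Kc * (0 + 0)"
    unfolding e_def by (intro tendsto_intros inv_powr_tendsto[OF cs a] inv_sqrt_tendsto[OF ns])
  then have e0: "e \<longlonglongrightarrow> 0" by simp
  have ev1: "eventually (\<lambda>i. N0 \<le> ns i) sequentially" using ns by (simp add: filterlim_at_top)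
  have ev2: "eventually (\<lambda>i. 1 \<le> cs i) sequentially" using cs by (simp add: filterlim_at_top)
  have ev: "eventually (\<lambda>i. lambda1 U (ns i) (L i) (enc i) (dec i) + lambda2 U (ns i) (L i) (enc i) (dec i) \<ge> 1 - e i) sequentially"
    using eventually_conj[OF ev1 ev2]
  proof (rule eventually_mono)
    fix i assume "N0 \<le> ns i \<and> 1 \<le> cs i"
    then show "lambda1 U (ns i) (L i) (enc i) (dec i) + lambda2 U (ns i) (L i) (enc i) (dec i) \<ge> 1 - e i"
      unfolding e_def using codes by (intro bnd) auto
  qed
  show "liminf (\<lambda>i. ereal (lambda1 U (ns i) (L i) (enc i) (dec i)
                            + lambda2 U (ns i) (L i) (enc i) (dec i))) \<ge> 1"
    by (rule liminf_ge_from_bound[OF ev e0])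
qed

lemma part2:
  fixes U :: "real^'q::finite^'q"
  assumes q2: "CARD('q) \<ge> 2" and st: "row_stochastic U"
  shows "(\<forall>x y. U $ x $ y > 0) \<longrightarrow>
      (\<exists>R'::real. \<forall>R > R'. \<forall>(ns :: nat \<Rightarrow> nat) (L :: nat \<Rightarrow> nat) (enc :: nat \<Rightarrow> nat \<Rightarrow> 'q list) dec.
         filterlim ns at_top sequentially \<longrightarrow>
         (\<forall>i. det_ID_code (ns i) (L i) (enc i) (dec i) \<and>
              real (L i) \<ge> R * real (ns i) powr ((real CARD('q) - 1) / 2)
                            * (log 2 (real (ns i))) ^ ((CARD('q) - 1) * (CARD('q) - 2) div 2)) \<longrightarrow>
         liminf (\<lambda>i. ereal (lambda1 U (ns i) (L i) (enc i) (dec i)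
                            + lambda2 U (ns i) (L i) (enc i) (dec i))) > 0)"
proof
  assume pos: "\<forall>x y. U $ x $ y > 0"
  obtain N0 Kc where Kc: "Kc > 0" and bnd: "\<And>n L enc dec (c::real). n \<ge> N0 \<Longrightarrow> c \<ge> 1 \<Longrightarrow> det_ID_code n L enc dec \<Longrightarrow>
     real L \<ge> c * real n powr ((real CARD('q) - 1) / 2)
                   * (log 2 (real n)) ^ ((CARD('q) - 1) * (CARD('q) - 2) div 2) \<Longrightarrow>
     lambda1 U n L enc dec + lambda2 U n L enc dec \<ge> 1 - Kc * (1 / c powr (1 / (real CARD('q) - 1)) + 1 / sqrt (real n))"
    using converse_bound[OF st pos q2] by blast
  define d where "d = real CARD('q) - 1"
  have d1: "d \<ge> 1" using q2 unfolding d_def by simp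
  define R' where "R' = max 1 ((2 * Kc) powr d)"
  show "\<exists>R'::real. \<forall>R > R'. \<forall>(ns :: nat \<Rightarrow> nat) (L :: nat \<Rightarrow> nat) (enc :: nat \<Rightarrow> nat \<Rightarrow> 'q list) dec.
         filterlim ns at_top sequentially \<longrightarrow>
         (\<forall>i. det_ID_code (ns i) (L i) (enc i) (dec i) \<and>
              real (L i) \<ge> R * real (ns i) powr ((real CARD('q) - 1) / 2)
                            * (log 2 (real (ns i))) ^ ((CARD('q) - 1) * (CARD('q) - 2) div 2)) \<longrightarrow>
         liminf (\<lambda>i. ereal (lambda1 U (ns i) (L i) (enc i) (dec i)
                            + lambda2 U (ns i) (L i) (enc i) (dec i))) > 0"
  proof (rule exI[of _ R'], intro allI impI)
    fix R :: real and ns :: "nat \<Rightarrow> nat" and L :: "nat \<Rightarrow> nat"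
      and enc :: "nat \<Rightarrow> nat \<Rightarrow> 'q list" and dec
    assume R: "R > R'" and ns: "filterlim ns at_top sequentially"
      and codes: "\<forall>i. det_ID_code (ns i) (L i) (enc i) (dec i) \<and>
              real (L i) \<ge> R * real (ns i) powr ((real CARD('q) - 1) / 2)
                            * (log 2 (real (ns i))) ^ ((CARD('q) - 1) * (CARD('q) - 2) div 2)"
    have R1: "R \<ge> 1" using R unfolding R'_def by simp
    have "2 * Kc = ((2 * Kc) powr d) powr (1 / d)" using Kc d1 by (simp add: powr_powr)
    also have "... \<le> R powr (1 / d)" using R d1 unfolding R'_def by (intro powr_mono2) auto
    finally have RK: "2 * Kc \<le> R powr (1 / d)" .
    have half: "Kc * (1 / R powr (1 / d)) \<le> 1 / 2"
    proof -
      have "R powr (1 / d) > 0" using R1 by simp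
      then show ?thesis using RK Kc by (simp add: field_simps)
    qed
    have "(\<lambda>i. Kc * (1 / sqrt (real (ns i)))) \<longlonglongrightarrow> Kc * 0"
      by (intro tendsto_intros inv_sqrt_tendsto[OF ns])
    then have ev0: "eventually (\<lambda>i. Kc * (1 / sqrt (real (ns i))) < 1/4) sequentially"
      by (intro order_tendstoD(2)) auto
    have ev1: "eventually (\<lambda>i. N0 \<le> ns i) sequentially" using ns by (simp add: filterlim_at_top)
    have ev: "eventually (\<lambda>i. ereal (1/4) \<le> ereal (lambda1 U (ns i) (L i) (enc i) (dec i) + lambda2 U (ns i) (L i) (enc i) (dec i))) sequentially"
      using eventually_conj[OF ev0 ev1]
    proof (rule eventually_mono)
      fix i assume i: "Kc * (1 / sqrt (real (ns i))) < 1/4 \<and> N0 \<le> ns i"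
      have "lambda1 U (ns i) (L i) (enc i) (dec i) + lambda2 U (ns i) (L i) (enc i) (dec i)
          \<ge> 1 - Kc * (1 / R powr (1 / d) + 1 / sqrt (real (ns i)))"
        unfolding d_def using codes i R1 by (intro bnd) auto
      then show "ereal (1/4) \<le> ereal (lambda1 U (ns i) (L i) (enc i) (dec i) + lambda2 U (ns i) (L i) (enc i) (dec i))"
        using half i by (simp add: distrib_left)
    qed
    have "ereal (1/4) = liminf (\<lambda>i. ereal (1/4))" by (simp add: Liminf_const)
    also have "... \<le> liminf (\<lambda>i. ereal (lambda1 U (ns i) (L i) (enc i) (dec i) + lambda2 U (ns i) (L i) (enc i) (dec i)))"
      by (rule Liminf_mono[OF ev])
    finally show "liminf (\<lambda>i. ereal (lambda1 U (ns i) (L i) (enc i) (dec i)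
                            + lambda2 U (ns i) (L i) (enc i) (dec i))) > 0"
      by (rule less_le_trans[rotated]) simp
  qed
qed

lemma rank_basis:
  fixes U :: "real^'q::finite^'q"
  assumes r: "rank U \<ge> 1"
  obtains I a0 g where "card I = rank U" "a0 \<in> I" "linear g"
    "\<forall>a\<in>I. g (U $ a) = (if a = a0 then 0 else axis a (1::real))"
proof -
  obtain B where B: "B \<subseteq> rows U" "independent B" "rows U \<subseteq> span B" "card B = dim (rows U)"
    using basis_exists by blast
  have cB: "card B = rank U" using B(4) by (simp add: row_rank_def)
  have finB: "finite B" using cB r card.infinite by fastforce
  have rowsU: "rows U = range (\<lambda>i. U $ i)"
    unfolding rows_def row_def by (auto simp: vec_lambda_eta)
  define idx where "idx v = (SOME i. U $ i = v)" for v
  have idx: "U $ (idx v) = v" if "v \<in> B" for v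
  proof -
    have "\<exists>i. U $ i = v" using that B(1) rowsU by auto
    then show ?thesis unfolding idx_def by (rule someI_ex)
  qed
  have inj: "inj_on idx B" by (metis idx inj_onI)
  define I where "I = idx ` B"
  have cI: "card I = rank U" unfolding I_def using card_image[OF inj] cB by simp
  obtain a0 where a0: "a0 \<in> I" using cI r by (metis card.empty ex_in_conv not_one_le_zero)
  define f where "f v = (if idx v = a0 then 0 else axis (idx v) (1::real))" for v
  obtain g where g: "linear g" "\<forall>v\<in>B. g v = f v"
    using linear_independent_extend[OF B(2)] by blast
  have "\<forall>a\<in>I. g (U $ a) = (if a = a0 then 0 else axis a 1)"
  proof
    fix a assume "a \<in> I"
    then obtain v where v: "v \<in> B" "a = idx v" unfolding I_def by auto
    have "U $ a = v" using idx[OF v(1)] v(2) by simp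
    then show "g (U $ a) = (if a = a0 then 0 else axis a 1)" using g(2) v unfolding f_def by simp
  qed
  then show ?thesis by (rule that[OF cI a0 g(1)])
qed

definition Nvec :: "'q::finite list \<Rightarrow> real^'q" where
  "Nvec y = (\<chi> b. real (cnt y b))"

lemma sum_list_cnt:
  fixes f :: "'q::finite \<Rightarrow> 'b::real_vector"
  shows "sum_list (map f x) = (\<Sum>a\<in>UNIV. real (cnt x a) *\<^sub>R f a)"
proof (induction x)
  case Nil then show ?case by (simp add: cnt_def)
next
  case (Cons c x)
  have t: "real (cnt (c # x) a) *\<^sub>R f a = real (cnt x a) *\<^sub>R f a + (if a = c then f a else 0)" for a
    unfolding cnt_Cons by (simp add: scaleR_add_left)
  have "(\<Sum>a\<in>UNIV. real (cnt (c # x) a) *\<^sub>R f a)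
      = (\<Sum>a\<in>UNIV. real (cnt x a) *\<^sub>R f a) + (\<Sum>a\<in>UNIV. (if a = c then f a else 0))"
    unfolding t by (rule sum.distrib)
  also have "(\<Sum>a\<in>UNIV. (if a = c then f a else 0)) = f c" by simp
  finally show ?case using Cons by simp
qed

lemma linear_sum_list: "linear g \<Longrightarrow> g (sum_list (map f xs)) = sum_list (map (g \<circ> f) xs)"
  by (induction xs) (auto simp: linear_add linear_0)

definition Eprod :: "('q \<Rightarrow> real) list \<Rightarrow> ('q list \<Rightarrow> real) \<Rightarrow> real" where
  "Eprod rs f = (\<Sum>y\<in>words (length rs). (\<Prod>j<length rs. (rs ! j) (y ! j)) * f y)"

lemma Eprod_Nil: "Eprod [] f = f []"
proof -
  have w0: "words 0 = {[]}" unfolding words_def by auto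
  show ?thesis unfolding Eprod_def by (simp add: w0)
qed

lemma Eprod_Cons:
  fixes r :: "'q::finite \<Rightarrow> real"
  shows "Eprod (r # rs) f = (\<Sum>a\<in>UNIV. r a * Eprod rs (\<lambda>y. f (a # y)))"
proof -
  let ?n = "length rs"
  have "Eprod (r # rs) f = (\<Sum>(a,y)\<in>UNIV \<times> words ?n. (\<Prod>j<Suc ?n. ((r # rs) ! j) ((a#y) ! j)) * f (a # y))"
    unfolding Eprod_def by (simp add: words_Suc sum.reindex inj_on_def case_prod_unfold del: prod.lessThan_Suc)
  also have "... = (\<Sum>a\<in>UNIV. \<Sum>y\<in>words ?n. r a * ((\<Prod>j<?n. (rs ! j) (y ! j)) * f (a # y)))"
    by (simp add: sum.cartesian_product prod.lessThan_Suc_shift mult.assoc del: prod.lessThan_Suc)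
  also have "... = (\<Sum>a\<in>UNIV. r a * Eprod rs (\<lambda>y. f (a # y)))"
    unfolding Eprod_def by (simp add: sum_distrib_left)
  finally show ?thesis .
qed

lemma Eprod_lin: "Eprod rs (\<lambda>y. \<alpha> * f y + \<beta> * g y) = \<alpha> * Eprod rs f + \<beta> * Eprod rs g"
  unfolding Eprod_def by (simp add: sum.distrib sum_distrib_left algebra_simps)

lemma Eprod_const:
  assumes "\<forall>r\<in>set rs. probvec (r :: 'q::finite \<Rightarrow> real)"
  shows "Eprod rs (\<lambda>_. c) = c"
  using assms by (induction rs) (auto simp: Eprod_Nil Eprod_Cons probvec_def sum_distrib_right[symmetric])

lemma Eprod_mean:
  assumes "\<forall>r\<in>set rs. probvec (r :: 'q::finite \<Rightarrow> real)"
  shows "Eprod rs (\<lambda>y. real (cnt y b) - sum_list (map (\<lambda>r. r b) rs)) = 0"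
  using assms
proof (induction rs)
  case Nil then show ?case by (simp add: Eprod_Nil cnt_def)
next
  case (Cons r rs)
  let ?m = "sum_list (map (\<lambda>r. r b) rs)"
  have pr: "probvec r" and prs: "\<forall>r\<in>set rs. probvec r" using Cons.prems by auto
  have "Eprod rs (\<lambda>y. real (cnt (a # y) b) - sum_list (map (\<lambda>r. r b) (r # rs)))
      = Eprod rs (\<lambda>y. 1 * (real (cnt y b) - ?m) + ((if b = a then 1 else 0) - r b) * 1)" for a
    by (simp add: cnt_Cons algebra_simps)
  also have "... a = (if b = a then 1 else 0) - r b" for a
    unfolding Eprod_lin Cons.IH[OF prs] Eprod_const[OF prs] by simp
  finally have e: "\<And>a. Eprod rs (\<lambda>y. real (cnt (a # y) b) - sum_list (map (\<lambda>r. r b) (r # rs)))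
      = (if b = a then 1 else 0) - r b" .
  have t: "r a * ((if b = a then 1 else 0) - r b) = (if a = b then r a else 0) - r a * r b" for a
    by (auto simp: algebra_simps)
  have "(\<Sum>a\<in>UNIV. r a * ((if b = a then 1 else 0) - r b)) = r b - (\<Sum>a\<in>UNIV. r a) * r b"
    unfolding t sum_subtractf sum_distrib_right by simp
  then show ?case unfolding Eprod_Cons e using pr by (simp add: probvec_def)
qed

lemma Eprod_var:
  assumes "\<forall>r\<in>set rs. probvec (r :: 'q::finite \<Rightarrow> real)"
  shows "Eprod rs (\<lambda>y. (real (cnt y b) - sum_list (map (\<lambda>r. r b) rs))^2) \<le> real (length rs)"
  using assms
proof (induction rs)
  case Nil then show ?case by (simp add: Eprod_Nil cnt_def)
next
  case (Cons r rs)
  let ?m = "sum_list (map (\<lambda>r. r b) rs)"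
  let ?V = "Eprod rs (\<lambda>y. (real (cnt y b) - ?m)^2)"
  have pr: "probvec r" and prs: "\<forall>r\<in>set rs. probvec r" using Cons.prems by auto
  define \<delta> where "\<delta> a = (if b = a then 1 else 0) - r b" for a
  have "Eprod rs (\<lambda>y. (real (cnt (a # y) b) - sum_list (map (\<lambda>r. r b) (r # rs)))^2)
      = Eprod rs (\<lambda>y. 1 * (real (cnt y b) - ?m)^2 + (2 * \<delta> a) * (real (cnt y b) - ?m)) + (\<delta> a)^2 * 1" for a
  proof -
    have "Eprod rs (\<lambda>y. (real (cnt (a # y) b) - sum_list (map (\<lambda>r. r b) (r # rs)))^2)
      = Eprod rs (\<lambda>y. 1 * (1 * (real (cnt y b) - ?m)^2 + (2 * \<delta> a) * (real (cnt y b) - ?m)) + (\<delta> a)^2 * 1)"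
      by (simp add: cnt_Cons \<delta>_def power2_eq_square algebra_simps)
    also have "... = Eprod rs (\<lambda>y. 1 * (real (cnt y b) - ?m)^2 + (2 * \<delta> a) * (real (cnt y b) - ?m)) + (\<delta> a)^2 * 1"
      unfolding Eprod_lin Eprod_const[OF prs] by simp
    finally show ?thesis .
  qed
  also have "... a = ?V + (\<delta> a)^2" for a
    unfolding Eprod_lin Eprod_mean[OF prs] by simp
  finally have e: "\<And>a. Eprod rs (\<lambda>y. (real (cnt (a # y) b) - sum_list (map (\<lambda>r. r b) (r # rs)))^2)
      = ?V + (\<delta> a)^2" .
  have d1: "(\<delta> a)^2 \<le> 1" for a
  proof -
    have "0 \<le> r b" "r b \<le> 1" using pr stoch_le1 unfolding probvec_def
      by (auto intro: order_trans[OF member_le_sum[of b UNIV r]] simp: probvec_def)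
    then show ?thesis unfolding \<delta>_def by (auto simp: power2_eq_square abs_square_le_1 intro: mult_le_one)
  qed
  have "(\<Sum>a\<in>UNIV. r a * (?V + (\<delta> a)^2)) \<le> (\<Sum>a\<in>UNIV. r a * (?V + 1))"
    using pr d1 by (intro sum_mono mult_left_mono) (auto simp: probvec_def)
  also have "... = ?V + 1" using pr by (simp add: probvec_def sum_distrib_right[symmetric])
  also have "... \<le> real (length rs) + 1" using Cons.IH[OF prs] by simp
  finally show ?case unfolding Eprod_Cons e by simp
qed

definition mvec :: "real^'q::finite^'q \<Rightarrow> 'q list \<Rightarrow> real^'q" where
  "mvec U x = (\<Sum>a\<in>UNIV. real (cnt x a) *\<^sub>R (U $ a))"

lemma cnt_permute:
  assumes "\<sigma> permutes {..<length y}"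
  shows "cnt (permute_list \<sigma> y) b = cnt y b"
  using assms by (simp add: cnt_def)

lemma cheb:
  fixes U :: "real^'q::finite^'q"
  assumes st: "row_stochastic U" and len: "length x = n"
  shows "(\<Sum>y\<in>words n. perm_channel U n x y * (norm (Nvec y - mvec U x))^2) \<le> real CARD('q) * real n"
proof -
  let ?rs = "map (rowv U) x"
  have prs: "\<forall>r\<in>set ?rs. probvec r" using probvec_row[OF st] by auto
  have mb: "mvec U x $ b = sum_list (map (\<lambda>r. r b) ?rs)" for b
  proof -
    have "sum_list (map (\<lambda>r. r b) ?rs) = sum_list (map (\<lambda>a. U $ a $ b) x)"
      by (simp add: rowv_def comp_def)
    also have "... = (\<Sum>a\<in>UNIV. real (cnt x a) *\<^sub>R (U $ a $ b))" by (rule sum_list_cnt)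
    finally show ?thesis unfolding mvec_def by (simp add: sum_component)
  qed
  have nrm: "(norm (Nvec y - mvec U x))^2 = (\<Sum>b\<in>UNIV. (real (cnt y b) - sum_list (map (\<lambda>r. r b) ?rs))^2)" for y
    unfolding power2_norm_eq_inner inner_vec_def by (simp add: Nvec_def mb power2_eq_square)
  have each: "(\<Sum>y\<in>words n. perm_channel U n x y * (real (cnt y b) - sum_list (map (\<lambda>r. r b) ?rs))^2) \<le> real n" for b
  proof -
    let ?G = "\<lambda>y. (real (cnt y b) - sum_list (map (\<lambda>r. r b) ?rs))^2"
    have "(\<Sum>y\<in>words n. perm_channel U n x y * ?G y) = (\<Sum>y\<in>words n. ?G y * PCL ?rs y)"
      by (intro sum.cong refl) (simp add: perm_channel_PCL[OF len] rowv_def[abs_def] mult.commute)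
    also have "... = (\<Sum>y\<in>words n. ?G y * (\<Prod>j<n. (?rs ! j) (y ! j)))"
      by (rule PCL_sym_sum) (auto simp: words_def cnt_permute len)
    also have "... = Eprod ?rs ?G" unfolding Eprod_def using len by (simp add: mult.commute)
    also have "... \<le> real (length ?rs)" by (rule Eprod_var[OF prs])
    finally show ?thesis using len by simp
  qed
  have "(\<Sum>y\<in>words n. perm_channel U n x y * (norm (Nvec y - mvec U x))^2)
      = (\<Sum>b\<in>UNIV. \<Sum>y\<in>words n. perm_channel U n x y * (real (cnt y b) - sum_list (map (\<lambda>r. r b) ?rs))^2)"
    unfolding nrm sum_distrib_left by (rule sum.swap)
  also have "... \<le> (\<Sum>b\<in>(UNIV::'q set). real n)" by (intro sum_mono each)
  also have "... = real CARD('q) * real n" by simp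
  finally show ?thesis .
qed

lemma markov:
  fixes U :: "real^'q::finite^'q"
  assumes st: "row_stochastic U" and len: "length x = n" and tau: "\<tau> > 0"
    and S: "S \<subseteq> {y\<in>words n. norm (Nvec y - mvec U x) \<ge> \<tau>}"
  shows "(\<Sum>y\<in>S. perm_channel U n x y) \<le> real CARD('q) * real n / \<tau>^2"
proof -
  have nn: "0 \<le> perm_channel U n x y" for y by (rule perm_channel_nonneg[OF st len])
  have finS: "finite S" using S by (rule finite_subset) simp
  have "(\<Sum>y\<in>S. perm_channel U n x y) \<le> (\<Sum>y\<in>S. perm_channel U n x y * ((norm (Nvec y - mvec U x))^2 / \<tau>^2))"
  proof (rule sum_mono)
    fix y assume "y \<in> S"
    then have "norm (Nvec y - mvec U x) \<ge> \<tau>" using S by auto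
    then have "\<tau>^2 \<le> (norm (Nvec y - mvec U x))^2" using tau by (intro power_mono) auto
    then have "1 \<le> (norm (Nvec y - mvec U x))^2 / \<tau>^2" using tau by simp
    then show "perm_channel U n x y \<le> perm_channel U n x y * ((norm (Nvec y - mvec U x))^2 / \<tau>^2)"
      using mult_left_mono[OF \<open>1 \<le> (norm (Nvec y - mvec U x))^2 / \<tau>^2\<close> nn[of y]] by simp
  qed
  also have "... \<le> (\<Sum>y\<in>words n. perm_channel U n x y * ((norm (Nvec y - mvec U x))^2 / \<tau>^2))"
    using S nn by (intro sum_mono2) auto
  also have "... = (\<Sum>y\<in>words n. perm_channel U n x y * (norm (Nvec y - mvec U x))^2) / \<tau>^2"
    by (simp add: sum_divide_distrib)
  also have "... \<le> real CARD('q) * real n / \<tau>^2"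
    using cheb[OF st len] tau by (intro divide_right_mono) auto
  finally show ?thesis .
qed

lemma count_concat: "count (mset (concat xss)) b = sum_list (map (\<lambda>xs. count (mset xs) b) xss)"
  by (induction xss) auto

lemma code_n:
  fixes U :: "real^'q::finite^'q"
  assumes st: "row_stochastic U" and cI: "card I = Suc d" and a0: "a0 \<in> I" and lg: "linear g"
    and gI: "\<forall>a\<in>I. g (U $ a) = (if a = a0 then 0 else axis a (1::real))"
    and Bd: "Bd > 0" "\<forall>v. norm (g v) \<le> Bd * norm v"
  shows "\<exists>enc dec. det_ID_code n (K^d) enc dec \<and>
     (n div (d*K) > 0 \<longrightarrow>
        lambda1 U n (K^d) enc dec \<le> 4 * Bd^2 * real CARD('q) * real n / (real (n div (d*K)))^2 \<and>
        lambda2 U n (K^d) enc dec \<le> 4 * Bd^2 * real CARD('q) * real n / (real (n div (d*K)))^2)"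
proof -
  define s where "s = n div (d*K)"
  define J where "J = I - {a0}"
  have finI: "finite I" using cI card.infinite by fastforce
  have finJ: "finite J" using finI by (simp add: J_def)
  have cJ: "card J = d" using cI a0 finI by (simp add: J_def card_Diff_singleton)
  have a0J: "a0 \<notin> J" by (simp add: J_def)
  have JI: "J \<subseteq> I" by (auto simp: J_def)
  obtain js where js: "set js = J" "distinct js" using finite_distinct_list[OF finJ] by blast
  define extz where "extz f = (\<lambda>a. if a \<in> J then f a else (0::nat))" for f :: "'q \<Rightarrow> nat"
  define T where "T = extz ` PiE J (\<lambda>_. {..<K})"
  have injext: "inj_on extz (PiE J (\<lambda>_. {..<K}))"
  proof (rule inj_onI)
    fix f f' assume f: "f \<in> PiE J (\<lambda>_. {..<K})" and f': "f' \<in> PiE J (\<lambda>_. {..<K})" and e: "extz f = extz f'"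
    show "f = f'"
    proof
      fix a show "f a = f' a"
      proof (cases "a \<in> J")
        case True then show ?thesis using fun_cong[OF e, of a] unfolding extz_def by simp
      next
        case False then show ?thesis using PiE_arb[OF f False] PiE_arb[OF f' False] by simp
      qed
    qed
  qed
  have cT: "card T = K^d"
    unfolding T_def card_image[OF injext] using finJ cJ by (simp add: card_PiE)
  have finT: "finite T" unfolding T_def using finJ by (intro finite_imageI finite_PiE) auto
  have tT: "(\<forall>a\<in>J. t a < K) \<and> (\<forall>a. a \<notin> J \<longrightarrow> t a = 0)" if "t \<in> T" for t
    using that unfolding T_def extz_def by (auto simp: PiE_def Pi_def)
  obtain h where h: "bij_betw h {0..<K^d} T" using ex_bij_betw_nat_finite[OF finT] cT by metis
  define word where "word t = concat (map (\<lambda>a. replicate (t a * s) a) js) @ replicate (n - s * (\<Sum>a\<in>J. t a)) a0" for t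
  have sumt: "s * (\<Sum>a\<in>J. t a) \<le> n" if "t \<in> T" for t
  proof -
    have "(\<Sum>a\<in>J. t a) \<le> (\<Sum>a\<in>J. K)" using tT[OF that] by (intro sum_mono) (auto simp: less_imp_le)
    then have "(\<Sum>a\<in>J. t a) \<le> d * K" using cJ by simp
    then have "s * (\<Sum>a\<in>J. t a) \<le> s * (d * K)" by simp
    also have "... \<le> n" unfolding s_def by (metis div_times_less_eq_dividend mult.commute)
    finally show ?thesis .
  qed
  have cntw: "cnt (word t) b = (if b \<in> J then t b * s else if b = a0 then n - s * (\<Sum>a\<in>J. t a) else 0)" for t b
  proof -
    have "count (mset (concat (map (\<lambda>a. replicate (t a * s) a) js))) b
        = sum_list (map (\<lambda>a. if b = a then t a * s else 0) js)"
      unfolding count_concat by (simp add: comp_def)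
    also have "... = (\<Sum>a\<in>J. if b = a then t a * s else 0)"
      using js by (simp add: sum_list_distinct_conv_sum_set)
    also have "... = (if b \<in> J then t b * s else 0)" using finJ by (simp add: sum.delta')
    finally show ?thesis unfolding word_def cnt_def using a0J by auto
  qed
  have lenw: "length (word t) = n" if "t \<in> T" for t
  proof -
    have "length (concat (map (\<lambda>a. replicate (t a * s) a) js)) = sum_list (map (\<lambda>a. t a * s) js)"
      by (simp add: length_concat comp_def)
    also have "... = (\<Sum>a\<in>J. t a * s)" using js by (simp add: sum_list_distinct_conv_sum_set)
    also have "... = s * (\<Sum>a\<in>J. t a)" by (simp add: sum_distrib_left mult.commute)
    finally show ?thesis unfolding word_def using sumt[OF that] by simp
  qed
  define tv where "tv t = (\<chi> a. real (t a))" for t :: "'q \<Rightarrow> nat"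
  define ctr where "ctr t = real s *\<^sub>R tv t" for t
  have gm: "g (mvec U (word t)) = ctr t" if "t \<in> T" for t
  proof -
    have "g (mvec U (word t)) = (\<Sum>a\<in>UNIV. real (cnt (word t) a) *\<^sub>R g (U $ a))"
      unfolding mvec_def by (simp add: linear_sum[OF lg] linear_scale[OF lg])
    also have "... = ctr t"
    proof (subst vec_eq_iff, intro allI)
      fix b
      have trm: "real (cnt (word t) a) * (g (U $ a) $ b) = (if a = b \<and> b \<noteq> a0 then real (cnt (word t) a) else 0)" for a
      proof (cases "cnt (word t) a = 0")
        case True then show ?thesis by auto
      next
        case False
        then have "a \<in> I" using cntw[of t a] JI a0 by (auto split: if_splits)
        then show ?thesis using gI by (auto simp: axis_def)
      qed
      have "(\<Sum>a\<in>UNIV. real (cnt (word t) a) *\<^sub>R g (U $ a)) $ b = (\<Sum>a\<in>UNIV. real (cnt (word t) a) * (g (U $ a) $ b))"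
        by (simp add: sum_component)
      also have "... = (if b \<noteq> a0 then real (cnt (word t) b) else 0)"
        unfolding trm by (simp add: sum.delta' conj_commute)
      also have "... = ctr t $ b"
        using tT[OF that] a0J cntw[of t b] unfolding ctr_def tv_def by auto
      finally show "(\<Sum>a\<in>UNIV. real (cnt (word t) a) *\<^sub>R g (U $ a)) $ b = ctr t $ b" .
    qed
    finally show ?thesis .
  qed
  define enc where "enc i = word (h i)" for i
  define dec where "dec i = {y\<in>words n. norm (g (Nvec y) - ctr (h i)) < real s / 2}" for i
  have hT: "h i \<in> T" if "i < K^d" for i using h that by (auto simp: bij_betw_def)
  have code: "det_ID_code n (K^d) enc dec"
    unfolding det_ID_code_def enc_def dec_def using lenw hT by (auto simp: words_def)
  define \<beta> where "\<beta> = 4 * Bd^2 * real CARD('q) * real n / (real s)^2"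
  have b0: "\<beta> \<ge> 0" unfolding \<beta>_def by simp
  have bounds: "err_miss U n enc dec i \<le> \<beta> \<and> (\<forall>j<K^d. j \<noteq> i \<longrightarrow> err_false U n enc dec i j \<le> \<beta>)"
    if i: "i < K^d" and s0: "s > 0" for i
  proof -
    define x where "x = enc i"
    have lx: "length x = n" using lenw hT[OF i] by (simp add: x_def enc_def)
    define \<tau> where "\<tau> = real s / (2 * Bd)"
    have tau: "\<tau> > 0" using s0 Bd by (simp add: \<tau>_def)
    define S where "S = {y\<in>words n. norm (Nvec y - mvec U x) \<ge> \<tau>}"
    have PS: "(\<Sum>y\<in>S. perm_channel U n x y) \<le> \<beta>"
    proof -
      have "(\<Sum>y\<in>S. perm_channel U n x y) \<le> real CARD('q) * real n / \<tau>^2"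
        by (rule markov[OF st lx tau]) (simp add: S_def)
      also have "... = \<beta>" unfolding \<beta>_def \<tau>_def using Bd by (simp add: field_simps power2_eq_square)
      finally show ?thesis .
    qed
    have key: "y \<in> S" if "y \<in> words n" "norm (g (Nvec y) - ctr (h i)) \<ge> real s / 2" for y
    proof -
      have "g (Nvec y) - ctr (h i) = g (Nvec y - mvec U x)"
        using gm[OF hT[OF i]] by (simp add: linear_diff[OF lg] x_def enc_def)
      then have "real s / 2 \<le> norm (g (Nvec y - mvec U x))" using that(2) by simp
      then have "real s / 2 \<le> Bd * norm (Nvec y - mvec U x)" using Bd(2) order_trans by blast
      then have "norm (Nvec y - mvec U x) \<ge> \<tau>" unfolding \<tau>_def using Bd by (simp add: field_simps)
      then show ?thesis using that(1) by (simp add: S_def)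
    qed
    have nn: "0 \<le> perm_channel U n x y" for y by (rule perm_channel_nonneg[OF st lx])
    have m: "err_miss U n enc dec i \<le> \<beta>"
    proof -
      have "words n - dec i \<subseteq> S"
      proof
        fix y assume "y \<in> words n - dec i"
        then have "y \<in> words n" "\<not> norm (g (Nvec y) - ctr (h i)) < real s / 2" unfolding dec_def by auto
        then show "y \<in> S" using key by (simp add: not_less)
      qed
      then have "err_miss U n enc dec i \<le> (\<Sum>y\<in>S. perm_channel U n x y)"
        unfolding err_miss_def x_def using nn by (intro sum_mono2) (auto simp: S_def x_def)
      then show ?thesis using PS by simp
    qed
    have f: "err_false U n enc dec i j \<le> \<beta>" if j: "j < K^d" "j \<noteq> i" for j
    proof -
      have hij: "h i \<noteq> h j" using h i j by (auto simp: bij_betw_def inj_on_def)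
      then obtain a where a: "h i a \<noteq> h j a" by auto
      have "1 \<le> \<bar>real (h i a) - real (h j a)\<bar>" using a by linarith
      also have "... = \<bar>(tv (h i) - tv (h j)) $ a\<bar>" by (simp add: tv_def)
      also have "... \<le> norm (tv (h i) - tv (h j))" by (rule component_le_norm_cart)
      finally have "real s * 1 \<le> real s * norm (tv (h i) - tv (h j))" by (intro mult_left_mono) auto
      then have "real s \<le> real s * norm (tv (h i) - tv (h j))" by simp
      also have "... = norm (ctr (h i) - ctr (h j))"
        by (simp add: ctr_def scaleR_diff_right[symmetric])
      finally have cc: "real s \<le> norm (ctr (h i) - ctr (h j))" .
      have "dec j \<subseteq> S"
      proof
        fix y assume y: "y \<in> dec j"
        then have yw: "y \<in> words n" and yn: "norm (g (Nvec y) - ctr (h j)) < real s / 2" by (auto simp: dec_def)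
        have "norm (ctr (h i) - ctr (h j)) \<le> norm (g (Nvec y) - ctr (h j)) + norm (g (Nvec y) - ctr (h i))"
          using norm_triangle_ineq4[of "g (Nvec y) - ctr (h j)" "g (Nvec y) - ctr (h i)"] by simp
        then have "norm (g (Nvec y) - ctr (h i)) \<ge> real s / 2" using cc yn by linarith
        then show "y \<in> S" using key yw by blast
      qed
      then have "err_false U n enc dec i j \<le> (\<Sum>y\<in>S. perm_channel U n x y)"
        unfolding err_false_def x_def using nn by (intro sum_mono2) (auto simp: S_def x_def)
      then show ?thesis using PS by simp
    qed
    show ?thesis using m f by blast
  qed
  have l1: "lambda1 U n (K^d) enc dec \<le> \<beta>" if s0: "s > 0"
    unfolding lambda1_def using bounds[OF _ s0] b0 by (subst Max_le_iff) auto
  have l2: "lambda2 U n (K^d) enc dec \<le> \<beta>" if s0: "s > 0"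
  proof -
    have fin: "finite {(i, j). i < K^d \<and> j < K^d \<and> i \<noteq> j}"
      by (rule finite_subset[of _ "{..<K^d} \<times> {..<K^d}"]) auto
    show ?thesis unfolding lambda2_def using bounds[OF _ s0] b0 fin by (subst Max_le_iff) auto
  qed
  show ?thesis
    by (rule exI[of _ enc], rule exI[of _ dec]) (use code l1 l2 in \<open>simp add: \<beta>_def s_def\<close>)
qed

lemma x_nonneg: "real n / log 2 (real n) \<ge> 0"
proof (cases "n = 0")
  case False then have "log 2 (real n) \<ge> 0" by simp
  then show ?thesis by simp
qed simp

lemma x_ge1:
  assumes "n \<ge> 2" shows "real n / log 2 (real n) \<ge> 1" "log 2 (real n) > 0"
proof -
  have lp: "log 2 (real n) > 0" using assms by simp
  have "real n \<le> 2 ^ n" using less_exp[of n] by (metis less_imp_le of_nat_less_numeral_power_cancel_iff of_nat_le_iff numeral_power_le_of_nat_cancel_iff less_le_not_le)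
  then have "log 2 (real n) \<le> real n" using assms by (intro log_of_power_le) auto
  then show "real n / log 2 (real n) \<ge> 1" using lp by simp
  show "log 2 (real n) > 0" by (rule lp)
qed

lemma asym1: "(\<lambda>n. real n / (real n / (sqrt (real n / log 2 (real n)) + 1))^2) \<longlonglongrightarrow> 0"
proof -
  have "((\<lambda>x::real. x / (x / (sqrt (x / log 2 x) + 1))^2) \<longlongrightarrow> 0) at_top" by real_asymp
  from filterlim_compose[OF this filterlim_real_sequentially] show ?thesis by (simp add: comp_def)
qed

lemma asym2: "filterlim (\<lambda>n. real n / (sqrt (real n / log 2 (real n)) + 1)) at_top sequentially"
proof -
  have "filterlim (\<lambda>x::real. x / (sqrt (x / log 2 x) + 1)) at_top at_top" by real_asymp
  from filterlim_compose[OF this filterlim_real_sequentially] show ?thesis by (simp add: comp_def)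
qed

lemma lambda_nonneg:
  "0 \<le> lambda1 U n L enc dec" "0 \<le> lambda2 U n L enc dec"
proof -
  show "0 \<le> lambda1 U n L enc dec" unfolding lambda1_def by (intro Max_ge_iff[THEN iffD2]) auto
  have fin: "finite {(i, j). i < L \<and> j < L \<and> i \<noteq> j}"
    by (rule finite_subset[of _ "{..<L} \<times> {..<L}"]) auto
  show "0 \<le> lambda2 U n L enc dec" unfolding lambda2_def using fin by (intro Max_ge_iff[THEN iffD2]) auto
qed

lemma part1_rank_le1:
  fixes U :: "real^'q::finite^'q"
  assumes r: "rank U \<le> 1"
  shows "\<exists>c > 0. \<exists>(L :: nat \<Rightarrow> nat) (enc :: nat \<Rightarrow> nat \<Rightarrow> 'q list) dec.
        (\<forall>n. det_ID_code n (L n) (enc n) (dec n) \<and>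
             real (L n) \<ge> (real n / (c * log 2 (real n))) powr ((real (rank U) - 1) / 2)) \<and>
        (\<lambda>n. lambda1 U n (L n) (enc n) (dec n)) \<longlonglongrightarrow> 0 \<and>
        (\<lambda>n. lambda2 U n (L n) (enc n) (dec n)) \<longlonglongrightarrow> 0"
proof -
  define enc :: "nat \<Rightarrow> nat \<Rightarrow> 'q list" where "enc n i = replicate n undefined" for n i
  define dec :: "nat \<Rightarrow> nat \<Rightarrow> 'q list set" where "dec n i = words n" for n i
  have code: "det_ID_code n 1 (enc n) (dec n)" for n
    unfolding det_ID_code_def enc_def dec_def by (simp add: words_def)
  have bnd: "real 1 \<ge> (real n / (1 * log 2 (real n))) powr ((real (rank U) - 1) / 2)" for n
  proof -
    define x where "x = real n / log 2 (real n)"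
    have e: "(real (rank U) - 1) / 2 \<le> 0" using r by simp
    show ?thesis
    proof (cases "n \<ge> 2")
      case True
      then have x1: "x \<ge> 1" unfolding x_def by (rule x_ge1)
      have "x powr ((real (rank U) - 1) / 2) \<le> x powr 0" by (rule powr_mono[OF e x1])
      moreover have "x powr 0 = 1" using x1 by simp
      ultimately have "x powr ((real (rank U) - 1) / 2) \<le> 1" by simp
      then show ?thesis unfolding x_def by simp
    next
      case False
      then have "n = 0 \<or> n = 1" by auto
      then show ?thesis by auto
    qed
  qed
  have l1: "lambda1 U n 1 (enc n) (dec n) = 0" for n
  proof -
    have "(\<lambda>i. err_miss U n (enc n) (dec n) i) ` {..<1} = {0}" unfolding err_miss_def dec_def by auto
    then show ?thesis unfolding lambda1_def by simp
  qed
  have l2: "lambda2 U n 1 (enc n) (dec n) = 0" for n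
  proof -
    have "{(i, j). i < (1::nat) \<and> j < 1 \<and> i \<noteq> j} = {}" by auto
    then show ?thesis unfolding lambda2_def by (simp only: image_empty Un_empty_right) simp
  qed
  show ?thesis
    apply (rule exI[of _ 1], simp only: zero_less_one simp_thms)
    apply (rule exI[of _ "\<lambda>_. 1"], rule exI[of _ enc], rule exI[of _ dec])
    using code bnd l1 l2 by simp
qed

lemma nat_ceiling_le: "(y::real) \<ge> 0 \<Longrightarrow> real (nat \<lceil>y\<rceil>) \<le> y + 1"
proof -
  assume y: "y \<ge> 0"
  then have "real (nat \<lceil>y\<rceil>) = real_of_int \<lceil>y\<rceil>" by simp
  also have "... \<le> y + 1" by linarith
  finally show ?thesis .
qed

lemma part1_rank_ge2:
  fixes U :: "real^'q::finite^'q"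
  assumes st: "row_stochastic U" and r: "rank U \<ge> 2"
  shows "\<exists>c > 0. \<exists>(L :: nat \<Rightarrow> nat) (enc :: nat \<Rightarrow> nat \<Rightarrow> 'q list) dec.
        (\<forall>n. det_ID_code n (L n) (enc n) (dec n) \<and>
             real (L n) \<ge> (real n / (c * log 2 (real n))) powr ((real (rank U) - 1) / 2)) \<and>
        (\<lambda>n. lambda1 U n (L n) (enc n) (dec n)) \<longlonglongrightarrow> 0 \<and>
        (\<lambda>n. lambda2 U n (L n) (enc n) (dec n)) \<longlonglongrightarrow> 0"
proof -
  define d where "d = rank U - 1"
  have d1: "d \<ge> 1" and rd: "rank U = Suc d" using r by (auto simp: d_def)
  have r1: "rank U \<ge> 1" using r by simp
  obtain I a0 g where cI: "card I = rank U" and a0: "a0 \<in> I" and lg: "linear g"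
    and gI: "\<forall>a\<in>I. g (U $ a) = (if a = a0 then 0 else axis a (1::real))"
    by (rule rank_basis[OF r1])
  obtain Bd where Bd: "Bd > 0" "\<And>v. norm (g v) \<le> Bd * norm v"
    using linear_bounded_pos[OF lg] by blast
  have Bd2: "\<forall>v. norm (g v) \<le> Bd * norm v" using Bd(2) by blast
  have cI': "card I = Suc d" using cI rd by simp
  define K where "K n = nat \<lceil>sqrt (real n / log 2 (real n))\<rceil>" for n
  define \<beta> where "\<beta> n = 4 * Bd^2 * real CARD('q) * real n / (real (n div (d * K n)))^2" for n
  define P where "P n enc dec \<longleftrightarrow> det_ID_code n (K n ^ d) enc dec \<and>
     (n div (d * K n) > 0 \<longrightarrow> lambda1 U n (K n ^ d) enc dec \<le> \<beta> n \<and>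
        lambda2 U n (K n ^ d) enc dec \<le> \<beta> n)" for n enc dec
  have ex: "\<exists>enc dec. P n enc dec" for n
    unfolding P_def \<beta>_def by (rule code_n[OF st cI' a0 lg gI Bd(1) Bd2])
  define enc where "enc n = (SOME e. \<exists>dd. P n e dd)" for n
  define dec where "dec n = (SOME dd. P n (enc n) dd)" for n
  have Pn: "P n (enc n) (dec n)" for n
  proof -
    have "\<exists>dd. P n (enc n) dd" unfolding enc_def using someI_ex[OF ex[of n]] .
    then show ?thesis unfolding dec_def using someI_ex by metis
  qed
  have f: "det_ID_code n (K n ^ d) (enc n) (dec n) \<and>
     (n div (d * K n) > 0 \<longrightarrow> lambda1 U n (K n ^ d) (enc n) (dec n) \<le> \<beta> n \<and>
        lambda2 U n (K n ^ d) (enc n) (dec n) \<le> \<beta> n)" for n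
    using Pn[of n] unfolding P_def .
  define L where "L n = K n ^ d" for n
  have bnd: "real (L n) \<ge> (real n / (1 * log 2 (real n))) powr ((real (rank U) - 1) / 2)" for n
  proof -
    define x where "x = real n / log 2 (real n)"
    have x0: "x \<ge> 0" unfolding x_def by (rule x_nonneg)
    have ex: "(real (rank U) - 1) / 2 = real d / 2" using rd by simp
    have Kx: "real (K n) \<ge> sqrt x" unfolding K_def x_def by linarith
    show ?thesis
    proof (cases "x = 0")
      case True
      have "(real n / (1 * log 2 (real n))) powr ((real (rank U) - 1) / 2) = 0"
        using True unfolding x_def by simp
      then show ?thesis by (metis of_nat_0_le_iff)
    next
      case False
      then have xp: "x > 0" using x0 by simp
      have "x powr (real d / 2) = (sqrt x) ^ d"
        using xp by (simp add: powr_half_sqrt[symmetric] powr_realpow[symmetric] powr_powr)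
      also have "... \<le> real (K n) ^ d" using Kx x0 by (intro power_mono) auto
      finally show ?thesis unfolding L_def ex using x_def by simp
    qed
  qed
  define \<psi> where "\<psi> n = real n / (sqrt (real n / log 2 (real n)) + 1)" for n
  define C where "C = 16 * Bd^2 * real CARD('q) * (real d)^2"
  have bound_ev: "eventually (\<lambda>n. n div (d * K n) > 0 \<and> \<beta> n \<le> C * (real n / (\<psi> n)^2)) sequentially"
  proof -
    have ev1: "eventually (\<lambda>n. \<psi> n \<ge> 4 * real d) sequentially"
      using asym2 unfolding \<psi>_def filterlim_at_top by blast
    have ev2: "eventually (\<lambda>n. n \<ge> 2) sequentially" by (rule eventually_ge_at_top)
    show ?thesis using eventually_conj[OF ev1 ev2]
    proof (rule eventually_mono)
      fix n assume n: "\<psi> n \<ge> 4 * real d \<and> n \<ge> 2"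
      define x where "x = real n / log 2 (real n)"
      have x1: "x \<ge> 1" unfolding x_def using n by (intro x_ge1) auto
      have Kx: "real (K n) \<ge> sqrt x" unfolding K_def x_def by linarith
      have Kx2: "real (K n) \<le> sqrt x + 1" unfolding K_def x_def by (rule nat_ceiling_le) (simp add: x_nonneg)
      have "sqrt x \<ge> 1" using x1 by simp
      then have K1: "real (K n) \<ge> 1" using Kx by linarith
      have dK: "real (d * K n) > 0" using K1 d1 by simp
      have psi: "\<psi> n = real n / (sqrt x + 1)" unfolding \<psi>_def x_def by simp
      have psi_pos: "\<psi> n > 0" using n d1 by linarith
      have "real (n div (d * K n)) > real n / real (d * K n) - 1"
      proof -
        define m where "m = d * K n"
        have mp: "real m > 0" using dK by (simp add: m_def)
        have e: "real (n div m) * real m + real (n mod m) = real n"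
          by (metis div_mult_mod_eq of_nat_add of_nat_mult)
        have "n mod m < m" using mp by simp
        then have "real (n mod m) < real m" by simp
        then have "real n < (real (n div (d * K n)) + 1) * real (d * K n)"
          using e unfolding m_def by (simp add: distrib_right)
        then show ?thesis using dK by (simp add: field_simps)
      qed
      moreover have "real n / real (d * K n) \<ge> \<psi> n / real d"
      proof -
        have "real (d * K n) \<le> real d * (sqrt x + 1)" using Kx2 d1 by (simp add: mult_left_mono)
        then have "real n / real (d * K n) \<ge> real n / (real d * (sqrt x + 1))"
          using dK by (intro divide_left_mono) (auto simp: x1 add_pos_pos)
        then show ?thesis unfolding psi using d1 by (simp add: field_simps)
      qed
      ultimately have s1: "real (n div (d * K n)) \<ge> \<psi> n / real d - 1" by linarith
      have "\<psi> n / real d \<ge> 4" using n d1 by (simp add: field_simps)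
      then have s2: "real (n div (d * K n)) \<ge> \<psi> n / (2 * real d)" using s1 d1 by (simp add: field_simps)
      have spos: "\<psi> n / (2 * real d) > 0" using psi_pos d1 by simp
      then have "n div (d * K n) > 0" using s2 by linarith
      moreover have "\<beta> n \<le> C * (real n / (\<psi> n)^2)"
      proof -
        have "(\<psi> n / (2 * real d))^2 \<le> (real (n div (d * K n)))^2" using s2 spos by (intro power_mono) auto
        then have "4 * Bd^2 * real CARD('q) * real n / (real (n div (d * K n)))^2
            \<le> 4 * Bd^2 * real CARD('q) * real n / (\<psi> n / (2 * real d))^2"
          using spos s2 d1 by (intro divide_left_mono mult_pos_pos) auto
        also have "... = C * (real n / (\<psi> n)^2)" unfolding C_def using d1 psi_pos
          by (simp add: field_simps power2_eq_square)
        finally show ?thesis unfolding \<beta>_def .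
      qed
      ultimately show "n div (d * K n) > 0 \<and> \<beta> n \<le> C * (real n / (\<psi> n)^2)" by blast
    qed
  qed
  have lim: "(\<lambda>n. C * (real n / (\<psi> n)^2)) \<longlonglongrightarrow> 0"
    using tendsto_mult_right_zero[OF asym1, of C] unfolding \<psi>_def by simp
  have conv1: "(\<lambda>n. lambda1 U n (L n) (enc n) (dec n)) \<longlonglongrightarrow> 0"
  proof (rule tendsto_sandwich[OF _ _ tendsto_const lim])
    show "eventually (\<lambda>n. 0 \<le> lambda1 U n (L n) (enc n) (dec n)) sequentially"
      by (simp add: lambda_nonneg)
    show "eventually (\<lambda>n. lambda1 U n (L n) (enc n) (dec n) \<le> C * (real n / (\<psi> n)^2)) sequentially"
      using bound_ev
    proof (rule eventually_mono)
      fix n assume a: "n div (d * K n) > 0 \<and> \<beta> n \<le> C * (real n / (\<psi> n)^2)"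
      then have "lambda1 U n (L n) (enc n) (dec n) \<le> \<beta> n" using f[of n] unfolding L_def by blast
      then show "lambda1 U n (L n) (enc n) (dec n) \<le> C * (real n / (\<psi> n)^2)" using a by linarith
    qed
  qed
  have conv2: "(\<lambda>n. lambda2 U n (L n) (enc n) (dec n)) \<longlonglongrightarrow> 0"
  proof (rule tendsto_sandwich[OF _ _ tendsto_const lim])
    show "eventually (\<lambda>n. 0 \<le> lambda2 U n (L n) (enc n) (dec n)) sequentially"
      by (simp add: lambda_nonneg)
    show "eventually (\<lambda>n. lambda2 U n (L n) (enc n) (dec n) \<le> C * (real n / (\<psi> n)^2)) sequentially"
      using bound_ev
    proof (rule eventually_mono)
      fix n assume a: "n div (d * K n) > 0 \<and> \<beta> n \<le> C * (real n / (\<psi> n)^2)"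
      then have "lambda2 U n (L n) (enc n) (dec n) \<le> \<beta> n" using f[of n] unfolding L_def by blast
      then show "lambda2 U n (L n) (enc n) (dec n) \<le> C * (real n / (\<psi> n)^2)" using a by linarith
    qed
  qed
  have code: "\<forall>n. det_ID_code n (L n) (enc n) (dec n)" using f by (simp add: L_def)
  show ?thesis
    apply (rule exI[of _ 1], simp only: zero_less_one simp_thms)
    apply (rule exI[of _ L], rule exI[of _ enc], rule exI[of _ dec])
    using code bnd conv1 conv2 by simp
qed

theorem theorem3:
  fixes U :: "real^'q^'q"
  assumes q2: "CARD('q) \<ge> 2"
    and stoch: "row_stochastic U"
  shows
    "(\<exists>c > 0. \<exists>(L :: nat \<Rightarrow> nat) (enc :: nat \<Rightarrow> nat \<Rightarrow> 'q list) dec.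
        (\<forall>n. det_ID_code n (L n) (enc n) (dec n) \<and>
             real (L n) \<ge> (real n / (c * log 2 (real n))) powr ((real (rank U) - 1) / 2)) \<and>
        (\<lambda>n. lambda1 U n (L n) (enc n) (dec n)) \<longlonglongrightarrow> 0 \<and>
        (\<lambda>n. lambda2 U n (L n) (enc n) (dec n)) \<longlonglongrightarrow> 0)
   \<and> ((\<forall>x y. U $ x $ y > 0) \<longrightarrow>
      (\<exists>R'::real. \<forall>R > R'. \<forall>(ns :: nat \<Rightarrow> nat) (L :: nat \<Rightarrow> nat) (enc :: nat \<Rightarrow> nat \<Rightarrow> 'q list) dec.
         filterlim ns at_top sequentially \<longrightarrow>
         (\<forall>i. det_ID_code (ns i) (L i) (enc i) (dec i) \<and>
              real (L i) \<ge> R * real (ns i) powr ((real CARD('q) - 1) / 2)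
                            * (log 2 (real (ns i))) ^ ((CARD('q) - 1) * (CARD('q) - 2) div 2)) \<longrightarrow>
         liminf (\<lambda>i. ereal (lambda1 U (ns i) (L i) (enc i) (dec i)
                            + lambda2 U (ns i) (L i) (enc i) (dec i))) > 0))
   \<and> ((\<forall>x y. U $ x $ y > 0) \<longrightarrow>
      (\<forall>(ns :: nat \<Rightarrow> nat) (cs :: nat \<Rightarrow> real) (L :: nat \<Rightarrow> nat) (enc :: nat \<Rightarrow> nat \<Rightarrow> 'q list) dec.
         filterlim ns at_top sequentially \<longrightarrow> filterlim cs at_top sequentially \<longrightarrow>
         (\<forall>i. det_ID_code (ns i) (L i) (enc i) (dec i) \<and>
              real (L i) \<ge> cs i * real (ns i) powr ((real CARD('q) - 1) / 2)
                            * (log 2 (real (ns i))) ^ ((CARD('q) - 1) * (CARD('q) - 2) div 2)) \<longrightarrow>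
         liminf (\<lambda>i. ereal (lambda1 U (ns i) (L i) (enc i) (dec i)
                            + lambda2 U (ns i) (L i) (enc i) (dec i))) \<ge> 1))"
  proof -
  have p1: "\<exists>c > 0. \<exists>(L :: nat \<Rightarrow> nat) (enc :: nat \<Rightarrow> nat \<Rightarrow> 'q list) dec.
        (\<forall>n. det_ID_code n (L n) (enc n) (dec n) \<and>
             real (L n) \<ge> (real n / (c * log 2 (real n))) powr ((real (rank U) - 1) / 2)) \<and>
        (\<lambda>n. lambda1 U n (L n) (enc n) (dec n)) \<longlonglongrightarrow> 0 \<and>
        (\<lambda>n. lambda2 U n (L n) (enc n) (dec n)) \<longlonglongrightarrow> 0"
  proof (cases "rank U \<le> 1")
    case True
    then show ?thesis by (rule part1_rank_le1)
  next
    case False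
    then have "rank U \<ge> 2" by simp
    then show ?thesis by (rule part1_rank_ge2[OF stoch])
  qed
  show ?thesis by (intro conjI p1 part2[OF q2 stoch] part3[OF q2 stoch])
qed

end
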